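(* Let $\mathcal{A}=(A_m)_{m\ge m_0}$ and $\mathcal{B}=(B_n)_{n\ge n_0}$ be 1-filtrations of algebras that are represented by languages $\mathcal{L}_A\subseteq\Sigma_A^*$ and $\mathcal{L}_B\subseteq\Sigma_B^*$, respectively. Then: (a) for all $m,n\gg0$ and every $d\in\mathbb{N}_0$ there is a bijection $[\operatorname{Mon}(A_m\boxtimes B_n)]_d\to(\mathcal{L}_A\boxtimes\mathcal{L}_B)^d_{m,n}$, i.e. the 2-filtration $(A_m\boxtimes B_n)_{m\ge m_0,n\ge n_0}$ is represented by $\mathcal{L}_A\boxtimes\mathcal{L}_B$; (b) if $\mathcal{L}_A$ and $\mathcal{L}_B$ are regular languages, then the equivariant Hilbert series $\operatorname{equivH}_{\mathcal{A}\boxtimes\mathcal{B}}(s_1,s_2,t)=\sum_{m\ge m_0,n\ge n_0}\sum_{d\ge0}\dim_{\mathbb{K}}[A_m\boxtimes B_n]_d\,t^ds_1^ms_2^n$ is a rational function.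
   Context: $\mathbb{K}$ is a field. Fix $c_1,c_2\ge1$. A 1-filtration $\mathcal{A}=(A_m)_{m\ge m_0}$ is a family where each $A_m$ is a finitely generated subalgebra of $R_m=\mathbb{K}[x_{i,j}: i\in[c_1], j\in[m]]$ generated by finitely many monomials all of the same degree $d_1$ (independent of $m$), together with $\mathbb{K}$-algebra homomorphisms $A_m\to A_n$ for $m\le n$ forming a direct system; $A_m$ is graded by $[A_m]_d=A_m\cap[R_m]_{dd_1}$, and $[\operatorname{Mon}(A_m)]_d$ is the set of monomials in $[A_m]_d$. Similarly $B_n\subseteq S_n=\mathbb{K}[y_{i,j}: i\in[c_2], j\in[n]]$ (distinct variables) is generated by monomials of degree $d_2$, with $[B_n]_d=B_n\cap[S_n]_{dd_2}$. The Segre product $A_m\boxtimes B_n$ is the subalgebra of $\mathbb{K}[x_{i,j},y_{k,l}]$ generated by all products $ab$ with $a$ a generating monomial of $A_m$ and $b$ a generating monomial of $B_n$, graded by $[A_m\boxtimes B_n]_d$ = its elements of degree $d(d_1+d_2)$; $[\operatorname{Mon}(A_m\boxtimes B_n)]_d$ is the set of monomials in this component. Alphabets: $\Sigma_A=\{\tau_{1,1},\dots,\tau_{1,a},\alpha_1,\dots,\alpha_p\}$, $\Sigma_B=\{\tau_{2,1},\dots,\tau_{2,b},\beta_1,\dots,\beta_q\}$. For a language $\mathcal{L}_A\subseteq\Sigma_A^*$, $(\mathcal{L}_A)^d_m$ denotes the set of words in $\mathcal{L}_A$ with exactly $m$ occurrences of letters among $\tau_{1,1},\dots,\tau_{1,a}$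 and exactly $d$ occurrences of letters among $\alpha_1,\dots,\alpha_p$; similarly $(\mathcal{L}_B)^d_n$. $\mathcal{A}$ is represented by $\mathcal{L}_A$ if there is $\tilde m$ such that for all $m\ge\tilde m$ and $d\in\mathbb{N}_0$ there is a bijection $[\operatorname{Mon}(A_m)]_d\to(\mathcal{L}_A)^d_m$; similarly for $\mathcal{B}$. Segre product of languages: every word in $\Sigma_A^*$ is uniquely $u_1\alpha_{i_1}\cdots u_d\alpha_{i_d}u_{d+1}$ with $u_k$ words in the $\tau_{1,\cdot}$ letters, and similarly for $\Sigma_B^*$ with $v_k$ words in the $\tau_{2,\cdot}$ letters; $\mathcal{L}_A\boxtimes\mathcal{L}_B$ is the language on $\{\tau_{1,1},\dots,\tau_{1,a},\tau_{2,1},\dots,\tau_{2,b}\}\cup\{\gamma_{i,j}:i\in[p],j\in[q]\}$ of all words $u_1v_1\gamma_{i_1,j_1}\cdots u_dv_d\gamma_{i_d,j_d}u_{d+1}v_{d+1}$ with $u_1\alpha_{i_1}\cdots u_d\alpha_{i_d}u_{d+1}\in\mathcal{L}_A$ and $v_1\beta_{j_1}\cdots v_d\beta_{j_d}v_{d+1}\in\mathcal{L}_B$. $(\mathcal{L}_A\boxtimes\mathcal{L}_B)^d_{m,n}$ is the set of its words with exactly $m$ letters $\tau_{1,\cdot}$, $n$ letters $\tau_{2,\cdot}$ and $d$ letters $\gamma_{\cdot,\cdot}$. Regular languages are those recognized by a finite automaton. *)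

theory Defs
  imports Main "HOL-Library.Poly_Mapping"
begin

datatype var = X nat nat | Y nat nat

type_synonym monomial = "var \<Rightarrow>\<^sub>0 nat"

definition mdeg :: "monomial \<Rightarrow> nat" where
  "mdeg u = (\<Sum>v\<in>Poly_Mapping.keys u. Poly_Mapping.lookup u v)"

text \<open>For an algebra generated by monomials
  all of degree d1, these are exactly the monomials of the graded component [A]_d.\<close>
fun mon_pow :: "monomial set \<Rightarrow> nat \<Rightarrow> monomial set" where
  "mon_pow G 0 = {0}"
| "mon_pow G (Suc d) = {g + u | g u. g \<in> G \<and> u \<in> mon_pow G d}"

definition one_filtration ::
  "(nat \<Rightarrow> nat \<Rightarrow> var) \<Rightarrow> nat \<Rightarrow> nat \<Rightarrow> nat \<Rightarrow> (nat \<Rightarrow> monomial set) \<Rightarrow> bool" where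
  "one_filtration v c d1 m0 G \<longleftrightarrow>
     (\<forall>m\<ge>m0. finite (G m) \<and>
        (\<forall>g\<in>G m. mdeg g = d1 \<and> Poly_Mapping.keys g \<subseteq> {v i j | i j. i \<in> {1..c} \<and> j \<in> {1..m}}))"

definition segre_gens :: "monomial set \<Rightarrow> monomial set \<Rightarrow> monomial set" where
  "segre_gens GA GB = {a + b | a b. a \<in> GA \<and> b \<in> GB}"

text \<open>Letters of \<Sigma>_A: Inl i = \<tau>_{1,i} (i \<in> [a]), Inr i = \<alpha>_i (i \<in> [p]).\<close>
definition sigma :: "nat \<Rightarrow> nat \<Rightarrow> (nat + nat) set" where
  "sigma a p = Inl ` {1..a} \<union> Inr ` {1..p}"

definition count_lang :: "(nat + nat) list set \<Rightarrow> nat \<Rightarrow> nat \<Rightarrow> (nat + nat) list set" where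
  "count_lang L m d = {w \<in> L. length (filter isl w) = m \<and> length (filter (\<lambda>x. \<not> isl x) w) = d}"

definition represented ::
  "nat \<Rightarrow> nat \<Rightarrow> nat \<Rightarrow> (nat \<Rightarrow> monomial set) \<Rightarrow> (nat + nat) list set \<Rightarrow> bool" where
  "represented a p m0 G L \<longleftrightarrow> L \<subseteq> lists (sigma a p) \<and>
     (\<exists>mt\<ge>m0. \<forall>m\<ge>mt. \<forall>d. \<exists>f. bij_betw f (mon_pow (G m) d) (count_lang L m d))"

definition regular :: "'a set \<Rightarrow> 'a list set \<Rightarrow> bool" where
  "regular \<Sigma> L \<longleftrightarrow> (\<exists>(Q::nat set) q0 (\<delta>::nat \<Rightarrow> 'a \<Rightarrow> nat) F.
      finite Q \<and> q0 \<in> Q \<and> (\<forall>q\<in>Q. \<forall>x\<in>\<Sigma>. \<delta> q x \<in> Q) \<and> F \<subseteq> Q \<and>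
      L = {w \<in> lists \<Sigma>. foldl \<delta> q0 w \<in> F})"

text \<open>Letters of the Segre alphabet: T1 i = \<tau>_{1,i}, T2 j = \<tau>_{2,j}, Gam i j = \<gamma>_{i,j}.\<close>
datatype seg_letter = T1 nat | T2 nat | Gam nat nat

text \<open>The word u_1 \<alpha>_{i_1} ... u_d \<alpha>_{i_d} u_{d+1}, given by the list of pairs
  (u_k, i_k) and the final block u_{d+1}.  Every word of \<Sigma>_A^* arises uniquely so.\<close>
definition word_of :: "(nat list \<times> nat) list \<Rightarrow> nat list \<Rightarrow> (nat + nat) list" where
  "word_of ps ul = concat (map (\<lambda>(u, i). map Inl u @ [Inr i]) ps) @ map Inl ul"

definition segre_lang ::
  "(nat + nat) list set \<Rightarrow> (nat + nat) list set \<Rightarrow> seg_letter list set" where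
  "segre_lang LA LB = {concat (map2 (\<lambda>(u, i) (v, j). map T1 u @ map T2 v @ [Gam i j]) ps qs)
        @ map T1 ul @ map T2 vl | ps ul qs vl.
        length ps = length qs \<and> word_of ps ul \<in> LA \<and> word_of qs vl \<in> LB}"

fun is_T1 :: "seg_letter \<Rightarrow> bool" where
  "is_T1 (T1 _) = True" | "is_T1 _ = False"
fun is_T2 :: "seg_letter \<Rightarrow> bool" where
  "is_T2 (T2 _) = True" | "is_T2 _ = False"
fun is_Gam :: "seg_letter \<Rightarrow> bool" where
  "is_Gam (Gam _ _) = True" | "is_Gam _ = False"

definition seg_count :: "seg_letter list set \<Rightarrow> nat \<Rightarrow> nat \<Rightarrow> nat \<Rightarrow> seg_letter list set" where
  "seg_count L m n d = {w \<in> L. length (filter is_T1 w) = m \<and> length (filter is_T2 w) = n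
                              \<and> length (filter is_Gam w) = d}"

text \<open>Coefficient of s1^m s2^n t^d: dim [A_m \<boxtimes> B_n]_d, which for a monomial algebra
  is the number of monomials in that component.\<close>
definition equivH :: "nat \<Rightarrow> nat \<Rightarrow> (nat \<Rightarrow> monomial set) \<Rightarrow> (nat \<Rightarrow> monomial set)
    \<Rightarrow> nat \<times> nat \<times> nat \<Rightarrow> int" where
  "equivH m0 n0 GA GB = (\<lambda>(m, n, d).
     if m \<ge> m0 \<and> n \<ge> n0 then int (card (mon_pow (segre_gens (GA m) (GB n)) d)) else 0)"

definition conv3 :: "(nat \<times> nat \<times> nat \<Rightarrow> int) \<Rightarrow> (nat \<times> nat \<times> nat \<Rightarrow> int)
    \<Rightarrow> nat \<times> nat \<times> nat \<Rightarrow> int" where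
  "conv3 f g = (\<lambda>(i, j, k). \<Sum>a\<le>i. \<Sum>b\<le>j. \<Sum>c\<le>k. f (a, b, c) * g (i - a, j - b, k - c))"

definition rational3 :: "(nat \<times> nat \<times> nat \<Rightarrow> int) \<Rightarrow> bool" where
  "rational3 H \<longleftrightarrow> (\<exists>P Q. finite {x. P x \<noteq> 0} \<and> finite {x. Q x \<noteq> 0} \<and> Q \<noteq> (\<lambda>_. 0)
      \<and> conv3 Q H = P)"

end

theory Submission
  imports Defs "HOL-Computational_Algebra.Formal_Power_Series"
begin


type_synonym R3 = "int fps fps fps"

abbreviation co :: "R3 \<Rightarrow> nat \<Rightarrow> nat \<Rightarrow> nat \<Rightarrow> int" where
  "co f i j k \<equiv> fps_nth (fps_nth (fps_nth f i) j) k"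

definition bnd :: "R3 \<Rightarrow> bool" where
  "bnd f \<longleftrightarrow> (\<exists>K. \<forall>i j k. co f i j k \<noteq> 0 \<longrightarrow> i \<le> K \<and> j \<le> K \<and> k \<le> K)"

lemma coeff3_mult:
  "co ((f::R3) * g) i j k = (\<Sum>a\<le>i. \<Sum>b\<le>j. \<Sum>c\<le>k. co f a b c * co g (i-a) (j-b) (k-c))"
  by (simp add: fps_mult_nth fps_sum_nth atLeast0AtMost)

lemma bnd_mult: assumes "bnd f" "bnd g" shows "bnd (f * g)"
proof -
  obtain K where K: "\<forall>i j k. co f i j k \<noteq> 0 \<longrightarrow> i \<le> K \<and> j \<le> K \<and> k \<le> K"
    using assms(1) bnd_def by blast
  obtain L where L: "\<forall>i j k. co g i j k \<noteq> 0 \<longrightarrow> i \<le> L \<and> j \<le> L \<and> k \<le> L"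
    using assms(2) bnd_def by blast
  have "co (f*g) i j k \<noteq> 0 \<longrightarrow> i \<le> K+L \<and> j \<le> K+L \<and> k \<le> K+L" for i j k
  proof
    assume "co (f*g) i j k \<noteq> 0"
    then obtain a b c where abc: "a \<le> i" "b \<le> j" "c \<le> k"
      "co f a b c * co g (i-a) (j-b) (k-c) \<noteq> 0"
      unfolding coeff3_mult
      by (metis (no_types, lifting) atMost_iff sum.not_neutral_contains_not_neutral)
    then have "co f a b c \<noteq> 0" "co g (i-a) (j-b) (k-c) \<noteq> 0" by auto
    with K L abc show "i \<le> K+L \<and> j \<le> K+L \<and> k \<le> K+L" by fastforce
  qed
  then show ?thesis unfolding bnd_def by blast
qed

lemma bnd_add: assumes "bnd f" "bnd g" shows "bnd (f + g)"
proof -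
  obtain K where K: "\<forall>i j k. co f i j k \<noteq> 0 \<longrightarrow> i \<le> K \<and> j \<le> K \<and> k \<le> K"
    using assms(1) bnd_def by blast
  obtain L where L: "\<forall>i j k. co g i j k \<noteq> 0 \<longrightarrow> i \<le> L \<and> j \<le> L \<and> k \<le> L"
    using assms(2) bnd_def by blast
  have "co (f+g) i j k \<noteq> 0 \<longrightarrow> i \<le> K+L \<and> j \<le> K+L \<and> k \<le> K+L" for i j k
    using K[rule_format, of i j k] L[rule_format, of i j k] by (cases "co f i j k = 0") auto
  then show ?thesis unfolding bnd_def by blast
qed

lemma bnd_uminus: assumes "bnd f" shows "bnd (- f)"
  using assms unfolding bnd_def by simp

lemma bnd_diff: assumes "bnd f" "bnd g" shows "bnd (f - g)"
  using bnd_add[OF assms(1) bnd_uminus[OF assms(2)]] by simp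

definition C3 :: "int \<Rightarrow> R3" where "C3 z = fps_const (fps_const (fps_const z))"
definition V1 :: R3 where "V1 = fps_X"
definition V2 :: R3 where "V2 = fps_const fps_X"
definition V3 :: R3 where "V3 = fps_const (fps_const fps_X)"

lemma C3_nth: "co (C3 z) i j k = (if i = 0 \<and> j = 0 \<and> k = 0 then z else 0)"
  by (simp add: C3_def fps_const_def)

lemma bnd_C3: "bnd (C3 z)"
  unfolding bnd_def C3_nth by (rule exI[of _ 0]) auto

lemma V1_mult_nth: "co (V1 * f) i j k = (if i = 0 then 0 else co f (i-1) j k)"
  by (simp add: V1_def fps_X_mult_nth)
lemma V2_mult_nth: "co (V2 * f) i j k = (if j = 0 then 0 else co f i (j-1) k)"
  by (simp add: V2_def fps_X_mult_nth)
lemma V3_mult_nth: "co (V3 * f) i j k = (if k = 0 then 0 else co f i j (k-1))"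
  by (simp add: V3_def fps_X_mult_nth)

lemma bnd_V: "bnd V1" "bnd V2" "bnd V3"
  unfolding bnd_def
  by (rule exI[of _ 1], simp add: V1_def V2_def V3_def fps_X_def fps_const_def)+

lemma one_C3: "(1::R3) = C3 1"
  by (simp add: C3_def)

lemma bnd_one: "bnd 1" using bnd_C3 one_C3 by metis
lemma bnd_zero: "bnd 0" unfolding bnd_def by simp

definition ratR :: "R3 \<Rightarrow> bool" where
  "ratR F \<longleftrightarrow> (\<exists>P Q. bnd P \<and> bnd Q \<and> Q \<noteq> 0 \<and> Q * F = P)"

lemma ratR_bnd: "bnd F \<Longrightarrow> ratR F"
  unfolding ratR_def using bnd_one by (intro exI[of _ F] exI[of _ 1]) auto

lemma ratR_add: assumes "ratR F" "ratR G" shows "ratR (F + G)"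
proof -
  obtain P Q where 1: "bnd P" "bnd Q" "Q \<noteq> 0" "Q * F = P" using assms(1) ratR_def by blast
  obtain P' Q' where 2: "bnd P'" "bnd Q'" "Q' \<noteq> 0" "Q' * G = P'" using assms(2) ratR_def by blast
  have "(Q*Q') * (F + G) = Q' * P + Q * P'"
    using 1(4) 2(4) by (simp add: algebra_simps)
  moreover have "bnd (Q' * P + Q * P')" "bnd (Q*Q')" "Q*Q' \<noteq> 0"
    using 1 2 by (auto intro: bnd_add bnd_mult)
  ultimately show ?thesis unfolding ratR_def by blast
qed

lemma ratR_mult: assumes "ratR F" "ratR G" shows "ratR (F * G)"
proof -
  obtain P Q where 1: "bnd P" "bnd Q" "Q \<noteq> 0" "Q * F = P" using assms(1) ratR_def by blast
  obtain P' Q' where 2: "bnd P'" "bnd Q'" "Q' \<noteq> 0" "Q' * G = P'" using assms(2) ratR_def by blast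
  have "(Q*Q') * (F * G) = P * P'"
    using 1(4) 2(4) by (metis mult.assoc mult.left_commute)
  moreover have "bnd (P * P')" "bnd (Q*Q')" "Q*Q' \<noteq> 0"
    using 1 2 by (auto intro: bnd_add bnd_mult)
  ultimately show ?thesis unfolding ratR_def by blast
qed

lemma ratR_uminus: assumes "ratR F" shows "ratR (- F)"
  using assms unfolding ratR_def by (metis bnd_uminus mult_minus_right)

lemma ratR_diff: assumes "ratR F" "ratR G" shows "ratR (F - G)"
  using ratR_add[OF assms(1) ratR_uminus[OF assms(2)]] by simp

lemma ratR_sum: "(\<And>x. x \<in> A \<Longrightarrow> ratR (f x)) \<Longrightarrow> ratR (sum f A)"
  by (induction A rule: infinite_finite_induct)
     (auto intro: ratR_add ratR_bnd bnd_zero)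

lemma ratR_cancel: assumes "ratR D" "D \<noteq> 0" "ratR (D * x)" shows "ratR x"
proof -
  obtain P Q where 1: "bnd P" "bnd Q" "Q \<noteq> 0" "Q * D = P" using assms(1) ratR_def by blast
  obtain P' Q' where 2: "bnd P'" "bnd Q'" "Q' \<noteq> 0" "Q' * (D * x) = P'" using assms(3) ratR_def by blast
  have "P \<noteq> 0" using 1 assms(2) by auto
  have "(Q' * P) * x = Q * P'" using 1(4) 2(4) by (metis mult.assoc mult.left_commute)
  moreover have "bnd (Q' * P)" "bnd (Q * P')" "Q' * P \<noteq> 0"
    using 1 2 \<open>P \<noteq> 0\<close> by (auto intro: bnd_mult)
  ultimately show ?thesis unfolding ratR_def by blast
qed

definition c0 :: "R3 \<Rightarrow> int" where "c0 f = co f 0 0 0"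

lemma c0_simps: "c0 (f + g) = c0 f + c0 g" "c0 (f * g) = c0 f * c0 g" "c0 (f - g) = c0 f - c0 g"
  "c0 1 = 1" "c0 (C3 z) = z" "c0 V1 = 0" "c0 V2 = 0" "c0 V3 = 0" "c0 0 = 0"
  by (simp_all add: c0_def C3_nth V1_def V2_def V3_def)

lemma c0_sum: "c0 (sum f A) = (\<Sum>x\<in>A. c0 (f x))"
  by (simp add: c0_def fps_sum_nth)

lemma ratR_one: "ratR 1" and ratR_zero: "ratR 0" and ratR_C3: "ratR (C3 z)"
  and ratR_V: "ratR V1" "ratR V2" "ratR V3"
  by (auto intro: ratR_bnd bnd_one bnd_zero bnd_C3 bnd_V)

lemma elim_step:
  fixes x b :: "'s \<Rightarrow> R3" and a :: "'s \<Rightarrow> 's \<Rightarrow> R3"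
  assumes fin: "finite S0" and zS: "z \<notin> S0"
    and eq: "\<forall>s\<in>insert z S0. x s = b s + (\<Sum>s'\<in>insert z S0. a s s' * x s')"
    and s: "s \<in> S0"
  shows "x s = ((1 - a z z) * b s + a s z * b z)
     + (\<Sum>s'\<in>S0. ((1 - a z z) * a s s' + a s z * a z s' + (if s = s' then a z z else 0)) * x s')"
proof -
  let ?D = "1 - a z z"
  have ez: "x z = b z + a z z * x z + (\<Sum>s'\<in>S0. a z s' * x s')"
    using eq[rule_format, of z] fin zS by (simp add: sum.insert add.assoc)
  have Dz: "?D * x z = b z + (\<Sum>s'\<in>S0. a z s' * x s')"
    using ez by (simp add: algebra_simps)
  have es: "x s = b s + a s z * x z + (\<Sum>s'\<in>S0. a s s' * x s')"
    using eq[rule_format, of s] fin zS s by (simp add: sum.insert add.assoc)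
  have "?D * x s = ?D * b s + a s z * (?D * x z) + (\<Sum>s'\<in>S0. ?D * a s s' * x s')"
    by (subst es) (simp add: algebra_simps sum_distrib_left)
  also have "\<dots> = ?D * b s + a s z * b z + (\<Sum>s'\<in>S0. (?D * a s s' + a s z * a z s') * x s')"
    unfolding Dz by (simp add: algebra_simps sum_distrib_left flip: sum.distrib)
  finally have 1: "?D * x s = ?D * b s + a s z * b z + (\<Sum>s'\<in>S0. (?D * a s s' + a s z * a z s') * x s')" .
  have 2: "(\<Sum>s'\<in>S0. (if s = s' then a z z else 0) * x s') = a z z * x s"
    using fin s by (simp add: if_distrib[of "\<lambda>c. c * _"] sum.delta cong: if_cong)
  have "x s = ?D * x s + a z z * x s" by (simp add: algebra_simps)
  also have "\<dots> = ?D * b s + a s z * b z + (\<Sum>s'\<in>S0. ((?D * a s s' + a s z * a z s') * x s'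
        + (if s = s' then a z z else 0) * x s'))"
    unfolding 1 sum.distrib 2 by simp
  finally show ?thesis by (simp add: algebra_simps)
qed

lemma elim:
  fixes x :: "'s \<Rightarrow> R3"
  assumes "finite S"
  shows "(\<forall>s\<in>S. x s = b s + (\<Sum>s'\<in>S. a s s' * x s')) \<Longrightarrow>
    (\<forall>s\<in>S. \<forall>s'\<in>S. ratR (a s s') \<and> c0 (a s s') = 0) \<Longrightarrow> (\<forall>s\<in>S. ratR (b s)) \<Longrightarrow>
    \<forall>s\<in>S. ratR (x s)"
  using assms
proof (induction S arbitrary: a b rule: finite_induct)
  case empty
  then show ?case by simp
next
  case (insert z S0)
  let ?D = "1 - a z z"
  define b' where "b' s = ?D * b s + a s z * b z" for s
  define a' where "a' s s' = ?D * a s s' + a s z * a z s' + (if s = s' then a z z else 0)" for s s'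
  have eqs: "\<forall>s\<in>S0. x s = b' s + (\<Sum>s'\<in>S0. a' s s' * x s')"
    using elim_step[OF insert(1,2,4)] unfolding a'_def b'_def by blast
  have ra: "\<forall>s\<in>S0. \<forall>s'\<in>S0. ratR (a' s s') \<and> c0 (a' s s') = 0"
    using insert(5) unfolding a'_def
    by (auto intro!: ratR_add ratR_mult ratR_diff ratR_one ratR_zero simp: c0_simps)
  have rb: "\<forall>s\<in>S0. ratR (b' s)"
    using insert(5,6) unfolding b'_def
    by (auto intro!: ratR_add ratR_mult ratR_diff ratR_one)
  have IH: "\<forall>s\<in>S0. ratR (x s)" using insert(3)[OF eqs ra rb] .
  have ez: "x z = b z + a z z * x z + (\<Sum>s'\<in>S0. a z s' * x s')"
    using insert(4)[rule_format, of z] insert(1,2) by (simp add: sum.insert add.assoc)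
  have Dz: "?D * x z = b z + (\<Sum>s'\<in>S0. a z s' * x s')"
    using ez by (simp add: algebra_simps)
  have "ratR (?D * x z)" unfolding Dz
    using insert(5,6) IH by (auto intro!: ratR_add ratR_mult ratR_sum)
  moreover have "ratR ?D" using insert(5) by (auto intro!: ratR_diff ratR_one)
  moreover have "?D \<noteq> 0"
  proof
    assume "?D = 0"
    then have "c0 ?D = 0" by (simp add: c0_simps)
    then show False using insert(5) by (simp add: c0_simps)
  qed
  ultimately have "ratR (x z)" using ratR_cancel by blast
  then show ?case using IH by simp
qed



definition toR :: "(nat \<times> nat \<times> nat \<Rightarrow> int) \<Rightarrow> R3" where
  "toR g = Abs_fps (\<lambda>i. Abs_fps (\<lambda>j. Abs_fps (\<lambda>k. g (i,j,k))))"

lemma co_toR [simp]: "co (toR g) i j k = g (i,j,k)"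
  by (simp add: toR_def)

lemma R3_ext: "(\<And>i j k. co f i j k = co g i j k) \<Longrightarrow> (f::R3) = g"
  by (intro fps_ext) blast


lemma bnd_finite: assumes "bnd P" shows "finite {x. (\<lambda>(i,j,k). co P i j k) x \<noteq> 0}"
proof -
  obtain K where K: "\<forall>i j k. co P i j k \<noteq> 0 \<longrightarrow> i \<le> K \<and> j \<le> K \<and> k \<le> K"
    using assms bnd_def by blast
  have "{x. (\<lambda>(i,j,k). co P i j k) x \<noteq> 0} \<subseteq> {..K} \<times> {..K} \<times> {..K}"
  proof
    fix x assume "x \<in> {x. (\<lambda>(i,j,k). co P i j k) x \<noteq> 0}"
    then obtain i j k where "x = (i,j,k)" "co P i j k \<noteq> 0" by (cases x) auto
    then show "x \<in> {..K} \<times> {..K} \<times> {..K}" using K by auto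
  qed
  moreover have "finite ({..K} \<times> {..K} \<times> {..K})" by blast
  ultimately show ?thesis using finite_subset by blast
qed

lemma ratR_rational3: assumes "ratR (toR g)" shows "rational3 g"
proof -
  obtain P Q where PQ: "bnd P" "bnd Q" "Q \<noteq> 0" "Q * toR g = P"
    using assms ratR_def by blast
  define Pf where "Pf = (\<lambda>(i,j,k). co P i j k)"
  define Qf where "Qf = (\<lambda>(i,j,k). co Q i j k)"
  have finP: "finite {x. Pf x \<noteq> 0}" using bnd_finite[OF PQ(1)] unfolding Pf_def .
  have finQ: "finite {x. Qf x \<noteq> 0}" using bnd_finite[OF PQ(2)] unfolding Qf_def .
  have Qne: "Qf \<noteq> (\<lambda>_. 0)"
  proof
    assume a: "Qf = (\<lambda>_. 0)"
    have "Q = 0"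
    proof (rule R3_ext)
      fix i j k
      have "Qf (i,j,k) = 0" using a by simp
      then show "co Q i j k = co 0 i j k" by (simp add: Qf_def)
    qed
    then show False using PQ(3) by simp
  qed
  have "conv3 Qf g = Pf"
  proof
    fix x :: "nat \<times> nat \<times> nat"
    obtain i j k where x: "x = (i,j,k)" by (cases x) auto
    have "conv3 Qf g x = co (Q * toR g) i j k"
      unfolding x conv3_def coeff3_mult by (simp add: Qf_def)
    then show "conv3 Qf g x = Pf x" using PQ(4) by (simp add: Pf_def x)
  qed
  then show ?thesis unfolding rational3_def using finP finQ Qne by blast
qed

lemma ratR_pow: "ratR F \<Longrightarrow> ratR (F ^ n)"
  by (induction n) (auto intro: ratR_mult ratR_one)

definition sol3 :: "'s set \<Rightarrow> ('s \<Rightarrow> int) \<Rightarrow> ('s \<Rightarrow> 'e1 set) \<Rightarrow> ('s \<Rightarrow> 'e1 \<Rightarrow> 's)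
   \<Rightarrow> ('s \<Rightarrow> 'e2 set) \<Rightarrow> ('s \<Rightarrow> 'e2 \<Rightarrow> 's) \<Rightarrow> ('s \<Rightarrow> 'e3 set) \<Rightarrow> ('s \<Rightarrow> 'e3 \<Rightarrow> 's)
   \<Rightarrow> ('s \<Rightarrow> nat \<times> nat \<times> nat \<Rightarrow> int) \<Rightarrow> bool" where
  "sol3 S c E1 t1 E2 t2 E3 t3 g \<longleftrightarrow> finite S \<and> (\<forall>s\<in>S.
     finite (E1 s) \<and> finite (E2 s) \<and> finite (E3 s) \<and>
     t1 s ` E1 s \<subseteq> S \<and> t2 s ` E2 s \<subseteq> S \<and> t3 s ` E3 s \<subseteq> S \<and>
     (\<forall>i j k. g s (i,j,k) = (if i = 0 \<and> j = 0 \<and> k = 0 then c s else 0)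
        + (if 0 < i then (\<Sum>e\<in>E1 s. g (t1 s e) (i-1,j,k)) else 0)
        + (if 0 < j then (\<Sum>e\<in>E2 s. g (t2 s e) (i,j-1,k)) else 0)
        + (if 0 < k then (\<Sum>e\<in>E3 s. g (t3 s e) (i,j,k-1)) else 0)))"

lemma sum_group_card:
  fixes f :: "'s \<Rightarrow> 'a::comm_semiring_1"
  assumes "finite E" "finite S" "t ` E \<subseteq> S"
  shows "(\<Sum>e\<in>E. f (t e)) = (\<Sum>s\<in>S. of_nat (card {e\<in>E. t e = s}) * f s)"
proof -
  have "(\<Sum>e\<in>E. f (t e)) = (\<Sum>s\<in>S. \<Sum>e\<in>{e. e \<in> E \<and> t e = s}. f (t e))"
    using sum.group[OF assms, of "\<lambda>e. f (t e)"] by simp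
  also have "\<dots> = (\<Sum>s\<in>S. \<Sum>e\<in>{e. e \<in> E \<and> t e = s}. f s)"
    by (intro sum.cong) auto
  also have "\<dots> = (\<Sum>s\<in>S. of_nat (card {e\<in>E. t e = s}) * f s)"
    by simp
  finally show ?thesis .
qed

lemma of_nat_C3: "(of_nat n :: R3) = C3 (int n)"
  by (simp add: C3_def fps_of_nat)

lemma co_sum: "co (sum f A) i j k = (\<Sum>x\<in>A. co (f x) i j k)"
  by (simp add: fps_sum_nth)

lemma sol3_ratR:
  assumes "sol3 S c E1 t1 E2 t2 E3 t3 g" "s \<in> S"
  shows "ratR (toR (g s))"
proof -
  define x where "x s = toR (g s)" for s
  have fS: "finite S" using assms(1) sol3_def by blast
  have eqx: "x s = C3 (c s) + V1 * (\<Sum>e\<in>E1 s. x (t1 s e)) + V2 * (\<Sum>e\<in>E2 s. x (t2 s e))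
      + V3 * (\<Sum>e\<in>E3 s. x (t3 s e))" if "s \<in> S" for s
  proof (rule R3_ext)
    fix i j k
    have e: "g s (i,j,k) = (if i = 0 \<and> j = 0 \<and> k = 0 then c s else 0)
        + (if 0 < i then (\<Sum>e\<in>E1 s. g (t1 s e) (i-1,j,k)) else 0)
        + (if 0 < j then (\<Sum>e\<in>E2 s. g (t2 s e) (i,j-1,k)) else 0)
        + (if 0 < k then (\<Sum>e\<in>E3 s. g (t3 s e) (i,j,k-1)) else 0)"
      using assms(1) that unfolding sol3_def by blast
    show "co (x s) i j k = co (C3 (c s) + V1 * (\<Sum>e\<in>E1 s. x (t1 s e)) + V2 * (\<Sum>e\<in>E2 s. x (t2 s e))
      + V3 * (\<Sum>e\<in>E3 s. x (t3 s e))) i j k"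
      unfolding fps_add_nth V1_mult_nth V2_mult_nth V3_mult_nth co_sum C3_nth
      using e by (simp add: x_def)
  qed
  define a where "a s s' = V1 * of_nat (card {e\<in>E1 s. t1 s e = s'})
     + V2 * of_nat (card {e\<in>E2 s. t2 s e = s'}) + V3 * of_nat (card {e\<in>E3 s. t3 s e = s'})" for s s'
  have eqa: "\<forall>s\<in>S. x s = C3 (c s) + (\<Sum>s'\<in>S. a s s' * x s')"
  proof
    fix s assume s: "s \<in> S"
    have f: "finite (E1 s)" "finite (E2 s)" "finite (E3 s)"
      "t1 s ` E1 s \<subseteq> S" "t2 s ` E2 s \<subseteq> S" "t3 s ` E3 s \<subseteq> S"
      using assms(1) s unfolding sol3_def by blast+
    show "x s = C3 (c s) + (\<Sum>s'\<in>S. a s s' * x s')"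
      unfolding eqx[OF s] sum_group_card[OF f(1) fS f(4)] sum_group_card[OF f(2) fS f(5)]
        sum_group_card[OF f(3) fS f(6)]
      by (simp add: a_def distrib_right sum.distrib sum_distrib_left mult.assoc add.assoc)
  qed
  have "\<forall>s\<in>S. ratR (x s)"
    apply (rule elim[OF fS eqa])
    unfolding a_def of_nat_C3
    by (auto intro!: ratR_add ratR_mult ratR_V ratR_C3 simp: c0_simps)
  then show ?thesis using assms(2) x_def by metis
qed


definition sol2 :: "'s set \<Rightarrow> ('s \<Rightarrow> int) \<Rightarrow> ('s \<Rightarrow> 'e1 set) \<Rightarrow> ('s \<Rightarrow> 'e1 \<Rightarrow> 's)
   \<Rightarrow> ('s \<Rightarrow> 'e2 set) \<Rightarrow> ('s \<Rightarrow> 'e2 \<Rightarrow> 's) \<Rightarrow> ('s \<Rightarrow> nat \<times> nat \<Rightarrow> int) \<Rightarrow> bool" where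
  "sol2 S c E1 t1 E2 t2 f \<longleftrightarrow> finite S \<and> (\<forall>s\<in>S.
     finite (E1 s) \<and> finite (E2 s) \<and> t1 s ` E1 s \<subseteq> S \<and> t2 s ` E2 s \<subseteq> S \<and>
     (\<forall>m d. f s (m,d) = (if m = 0 \<and> d = 0 then c s else 0)
        + (if 0 < m then (\<Sum>e\<in>E1 s. f (t1 s e) (m-1,d)) else 0)
        + (if 0 < d then (\<Sum>e\<in>E2 s. f (t2 s e) (m,d-1)) else 0)))"

lemma sol2_eq: "sol2 S c E1 t1 E2 t2 f \<Longrightarrow> s \<in> S \<Longrightarrow>
   f s (m,d) = (if m = 0 \<and> d = 0 then c s else 0)
        + (if 0 < m then (\<Sum>e\<in>E1 s. f (t1 s e) (m-1,d)) else 0)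
        + (if 0 < d then (\<Sum>e\<in>E2 s. f (t2 s e) (m,d-1)) else 0)"
  unfolding sol2_def by blast

lemma key_prod:
  fixes a0 b0 :: int and m n d :: nat
  assumes "fp = (if m = 0 \<and> d = 0 then a0 else 0) + (if 0 < d then (\<Sum>e\<in>A. fa e) else 0)"
    and "gv = (if n = 0 \<and> d = 0 then b0 else 0) + (if 0 < n then (\<Sum>e\<in>B1. gb1 e) else 0)
            + (if 0 < d then (\<Sum>e\<in>B. gb e) else 0)"
  shows "fp * gv = (if m = 0 \<and> n = 0 \<and> d = 0 then a0 * b0 else 0)
     + (if 0 < n then (\<Sum>e\<in>B1. fp * gb1 e) else 0)
     + (if 0 < d then (\<Sum>e\<in>A \<times> B. fa (fst e) * gb (snd e)) else 0)"
proof (cases "d = 0")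
  case True
  then show ?thesis using assms by (simp add: algebra_simps sum_distrib_left)
next
  case False
  then have "0 < d" by simp
  then have "fp * gv = (\<Sum>e\<in>A. fa e) * (\<Sum>e\<in>B. gb e) + (if 0 < n then (\<Sum>e\<in>B1. fp * gb1 e) else 0)"
    using assms by (simp add: algebra_simps sum_distrib_left)
  then show ?thesis using False by (simp add: sum_product sum.cartesian_product case_prod_beta)
qed

lemma segre_sys:
  assumes A: "sol2 SA cA EA1 tA1 EA2 tA2 f" and B: "sol2 SB cB EB1 tB1 EB2 tB2 g"
    and sA: "sA \<in> SA" and sB: "sB \<in> SB"
  shows "ratR (toR (\<lambda>(m,n,d). f sA (m,d) * g sB (n,d)))"
proof -
  define f' where "f' s md = (if fst md = 0 \<and> snd md = 0 then cA s else 0)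
     + (if 0 < snd md then (\<Sum>e\<in>EA2 s. f (tA2 s e) (fst md, snd md - 1)) else 0)" for s md
  define S where "S = (UNIV :: bool set) \<times> SA \<times> SB"
  define G where "G = (\<lambda>(p,s,r) (m,n,d). (if p then f' s (m,d) else f s (m,d)) * g r (n,d))"
  define E1 where "E1 = (\<lambda>(p::bool,s,r::'d). if p then {} else EA1 s)"
  define t1 where "t1 = (\<lambda>(p::bool,s,r::'d) e. (False, tA1 s e, r))"
  define E2 where "E2 = (\<lambda>(p::bool,s::'a,r). EB1 r)"
  define t2 where "t2 = (\<lambda>(p::bool,s::'a,r) e. (True, s, tB1 r e))"
  define E3 where "E3 = (\<lambda>(p::bool,s,r). EA2 s \<times> EB2 r)"
  define t3 where "t3 = (\<lambda>(p::bool,s,r) e. (False, tA2 s (fst e), tB2 r (snd e)))"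
  define c where "c = (\<lambda>(p::bool,s,r). cA s * cB r)"
  have "sol3 S c E1 t1 E2 t2 E3 t3 G"
    unfolding sol3_def
  proof (intro conjI ballI allI)
    show "finite S" using A B unfolding S_def sol2_def by simp
    fix x assume "x \<in> S"
    then obtain p s r where x: "x = (p,s,r)" and s: "s \<in> SA" and r: "r \<in> SB"
      unfolding S_def by auto
    have As: "finite (EA1 s)" "finite (EA2 s)" "tA1 s ` EA1 s \<subseteq> SA" "tA2 s ` EA2 s \<subseteq> SA"
      using A s unfolding sol2_def by blast+
    have Br: "finite (EB1 r)" "finite (EB2 r)" "tB1 r ` EB1 r \<subseteq> SB" "tB2 r ` EB2 r \<subseteq> SB"
      using B r unfolding sol2_def by blast+
    show "finite (E1 x)" "finite (E2 x)" "finite (E3 x)"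
      using As Br by (auto simp: x E1_def E2_def E3_def)
    show "t1 x ` E1 x \<subseteq> S" "t2 x ` E2 x \<subseteq> S" "t3 x ` E3 x \<subseteq> S"
      using As Br s r by (auto simp: x S_def E1_def E2_def E3_def t1_def t2_def t3_def)
    fix m n d
    have fe: "f s (m,d) = f' s (m,d) + (if 0 < m then (\<Sum>e\<in>EA1 s. f (tA1 s e) (m-1,d)) else 0)"
      using sol2_eq[OF A s, of m d] unfolding f'_def by simp
    have KEY: "f' s (m,d) * g r (n,d) = (if m = 0 \<and> n = 0 \<and> d = 0 then cA s * cB r else 0)
     + (if 0 < n then (\<Sum>e\<in>EB1 r. f' s (m,d) * g (tB1 r e) (n-1,d)) else 0)
     + (if 0 < d then (\<Sum>e\<in>EA2 s \<times> EB2 r. f (tA2 s (fst e)) (m,d-1) * g (tB2 r (snd e)) (n,d-1)) else 0)"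
      by (rule key_prod[OF _ sol2_eq[OF B r]]) (simp add: f'_def)
    show "G x (m,n,d) = (if m = 0 \<and> n = 0 \<and> d = 0 then c x else 0)
        + (if 0 < m then (\<Sum>e\<in>E1 x. G (t1 x e) (m-1,n,d)) else 0)
        + (if 0 < n then (\<Sum>e\<in>E2 x. G (t2 x e) (m,n-1,d)) else 0)
        + (if 0 < d then (\<Sum>e\<in>E3 x. G (t3 x e) (m,n,d-1)) else 0)"
    proof (cases p)
      case True
      then show ?thesis using KEY
        by (simp add: x G_def c_def E1_def E2_def E3_def t1_def t2_def t3_def case_prod_beta)
    next
      case False
      have "G x (m,n,d) = f' s (m,d) * g r (n,d)
         + (if 0 < m then (\<Sum>e\<in>EA1 s. f (tA1 s e) (m-1,d) * g r (n,d)) else 0)"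
        using False by (simp add: x G_def fe algebra_simps sum_distrib_right sum_distrib_left)
      then show ?thesis using KEY False
        by (simp add: x G_def c_def E1_def E2_def E3_def t1_def t2_def t3_def case_prod_beta)
    qed
  qed
  from sol3_ratR[OF this, of "(False, sA, sB)"]
  have "ratR (toR (G (False, sA, sB)))" using sA sB by (simp add: S_def)
  moreover have "G (False, sA, sB) = (\<lambda>(m,n,d). f sA (m,d) * g sB (n,d))"
    by (simp add: G_def)
  ultimately show ?thesis by simp
qed


definition dfaW :: "nat \<Rightarrow> nat \<Rightarrow> (nat \<Rightarrow> nat + nat \<Rightarrow> nat) \<Rightarrow> nat set \<Rightarrow> nat \<Rightarrow> nat \<Rightarrow> nat
   \<Rightarrow> (nat + nat) list set" where
  "dfaW a p \<delta> F q m d = {w \<in> lists (sigma a p). foldl \<delta> q w \<in> F \<and>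
      length (filter isl w) = m \<and> length (filter (\<lambda>x. \<not> isl x) w) = d}"

lemma dfaW_finite: "finite (dfaW a p \<delta> F q m d)"
proof -
  have "dfaW a p \<delta> F q m d \<subseteq> {xs. set xs \<subseteq> sigma a p \<and> length xs = m + d}"
  proof
    fix w assume "w \<in> dfaW a p \<delta> F q m d"
    then have "w \<in> lists (sigma a p)" "length (filter isl w) = m" "length (filter (\<lambda>x. \<not> isl x) w) = d"
      unfolding dfaW_def by auto
    moreover have "length (filter isl w) + length (filter (\<lambda>x. \<not> isl x) w) = length w"
      by (rule sum_length_filter_compl)
    ultimately show "w \<in> {xs. set xs \<subseteq> sigma a p \<and> length xs = m + d}" by auto
  qed
  moreover have "finite (sigma a p)" unfolding sigma_def by simp
  ultimately show ?thesis using finite_lists_length_eq finite_subset by blast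
qed

lemma dfaW_cons_Inl:
  assumes "i \<in> {1..a}"
  shows "{w'. Inl i # w' \<in> dfaW a p \<delta> F q m d} = (if 0 < m then dfaW a p \<delta> F (\<delta> q (Inl i)) (m-1) d else {})"
  using assms by (auto simp: dfaW_def sigma_def)

lemma dfaW_cons_Inr:
  assumes "i \<in> {1..p}"
  shows "{w'. Inr i # w' \<in> dfaW a p \<delta> F q m d} = (if 0 < d then dfaW a p \<delta> F (\<delta> q (Inr i)) m (d-1) else {})"
  using assms by (auto simp: dfaW_def sigma_def)

lemma dfaW_card:
  "card (dfaW a p \<delta> F q m d) = (if m = 0 \<and> d = 0 \<and> q \<in> F then 1 else 0)
     + (if 0 < m then (\<Sum>i\<in>{1..a}. card (dfaW a p \<delta> F (\<delta> q (Inl i)) (m-1) d)) else 0)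
     + (if 0 < d then (\<Sum>i\<in>{1..p}. card (dfaW a p \<delta> F (\<delta> q (Inr i)) m (d-1))) else 0)"
proof -
  let ?W = "dfaW a p \<delta> F q m d"
  define A0 where "A0 = ?W \<inter> {[]}"
  define A1 where "A1 = (\<Union>i\<in>{1..a}. (#) (Inl i) ` {w'. Inl i # w' \<in> ?W})"
  define A2 where "A2 = (\<Union>i\<in>{1..p}. (#) (Inr i) ` {w'. Inr i # w' \<in> ?W})"
  have W: "?W = A0 \<union> A1 \<union> A2"
  proof (intro equalityI subsetI)
    fix w assume w: "w \<in> ?W"
    show "w \<in> A0 \<union> A1 \<union> A2"
    proof (cases w)
      case Nil then show ?thesis using w by (simp add: A0_def)
    next
      case (Cons x w')
      have "x \<in> sigma a p" using w Cons by (simp add: dfaW_def)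
      then show ?thesis using w Cons unfolding sigma_def A1_def A2_def by auto
    qed
  qed (auto simp: A0_def A1_def A2_def)
  have fin: "finite {w'. x # w' \<in> ?W}" for x
  proof -
    have "{w'. x # w' \<in> ?W} = (#) x -` ?W" by auto
    moreover have "inj ((#) x)" by (simp add: inj_def)
    ultimately show ?thesis using dfaW_finite[of a p \<delta> F q m d] finite_vimageI by metis
  qed
  have c0: "card A0 = (if m = 0 \<and> d = 0 \<and> q \<in> F then 1 else 0)"
    by (auto simp: A0_def dfaW_def)
  have c1: "card A1 = (\<Sum>i\<in>{1..a}. card {w'. Inl i # w' \<in> ?W})"
    unfolding A1_def
    by (subst card_UN_disjoint) (auto simp: fin card_image)
  have c2: "card A2 = (\<Sum>i\<in>{1..p}. card {w'. Inr i # w' \<in> ?W})"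
    unfolding A2_def
    by (subst card_UN_disjoint) (auto simp: fin card_image)
  have finA: "finite A0" "finite A1" "finite A2" using W dfaW_finite[of a p \<delta> F q m d]
    by (metis finite_Un)+
  have "card ?W = card A0 + card A1 + card A2"
    unfolding W using finA
    by (subst card_Un_disjoint; (auto simp: A0_def A1_def A2_def)?)+
  also have "card A1 = (if 0 < m then (\<Sum>i\<in>{1..a}. card (dfaW a p \<delta> F (\<delta> q (Inl i)) (m-1) d)) else 0)"
    unfolding c1 by (auto simp: dfaW_cons_Inl intro: sum.neutral)
  also have "card A2 = (if 0 < d then (\<Sum>i\<in>{1..p}. card (dfaW a p \<delta> F (\<delta> q (Inr i)) m (d-1))) else 0)"
    unfolding c2 by (auto simp: dfaW_cons_Inr intro: sum.neutral)
  finally show ?thesis unfolding c0 .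
qed

lemma dfa_sys:
  assumes "finite Q" "\<forall>q\<in>Q. \<forall>x\<in>sigma a p. \<delta> q x \<in> Q"
  shows "sol2 Q (\<lambda>q. if q \<in> F then 1 else 0) (\<lambda>q. {1..a}) (\<lambda>q i. \<delta> q (Inl i))
     (\<lambda>q. {1..p}) (\<lambda>q i. \<delta> q (Inr i)) (\<lambda>q (m,d). int (card (dfaW a p \<delta> F q m d)))"
  unfolding sol2_def
proof (intro conjI ballI allI)
  show "finite Q" by fact
  fix q assume q: "q \<in> Q"
  show "finite {1..a}" "finite {1..p}" by auto
  show "(\<lambda>i. \<delta> q (Inl i)) ` {1..a} \<subseteq> Q" "(\<lambda>i. \<delta> q (Inr i)) ` {1..p} \<subseteq> Q"
    using assms(2) q by (auto simp: sigma_def)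
  fix m d
  show "(case (m, d) of (m, d) \<Rightarrow> int (card (dfaW a p \<delta> F q m d))) =
       (if m = 0 \<and> d = 0 then if q \<in> F then 1 else 0 else 0) +
       (if 0 < m then \<Sum>e\<in>{1..a}. (case (m - 1, d) of (m, d) \<Rightarrow> int (card (dfaW a p \<delta> F (\<delta> q (Inl e)) m d))) else 0) +
       (if 0 < d then \<Sum>e\<in>{1..p}. (case (m, d - 1) of (m, d) \<Rightarrow> int (card (dfaW a p \<delta> F (\<delta> q (Inr e)) m d))) else 0)"
    by (subst dfaW_card) (simp add: of_nat_sum)
qed


lemma counter_sys:
  assumes A: "sol2 S c E1 t1 E2 t2 f"
  shows "sol2 (S \<times> {0..M}) (\<lambda>(s,k). if M \<le> k then c s else 0) (\<lambda>(s,k). E1 s)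
    (\<lambda>(s,k) e. (t1 s e, min (k+1) M)) (\<lambda>(s,k). E2 s) (\<lambda>(s,k) e. (t2 s e, k))
    (\<lambda>(s,k) (m,d). if M \<le> m + k then f s (m,d) else 0)"
  unfolding sol2_def
proof (intro conjI ballI allI)
  show "finite (S \<times> {0..M})" using A unfolding sol2_def by simp
  fix x assume "x \<in> S \<times> {0..M}"
  then obtain s k where x: "x = (s,k)" and s: "s \<in> S" and k: "k \<le> M" by auto
  have As: "finite (E1 s)" "finite (E2 s)" "t1 s ` E1 s \<subseteq> S" "t2 s ` E2 s \<subseteq> S"
    using A s unfolding sol2_def by blast+
  show "finite ((\<lambda>(s,k). E1 s) x)" "finite ((\<lambda>(s,k). E2 s) x)"
    using As by (auto simp: x)
  show "(\<lambda>(s, k) e. (t1 s e, min (k + 1) M)) x ` (\<lambda>(s,k). E1 s) x \<subseteq> S \<times> {0..M}"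
       "(\<lambda>(s, k) e. (t2 s e, k)) x ` (\<lambda>(s,k). E2 s) x \<subseteq> S \<times> {0..M}"
    using As k by (auto simp: x)
  fix m d
  have fe: "f s (m,d) = (if m = 0 \<and> d = 0 then c s else 0)
        + (if 0 < m then (\<Sum>e\<in>E1 s. f (t1 s e) (m-1,d)) else 0)
        + (if 0 < d then (\<Sum>e\<in>E2 s. f (t2 s e) (m,d-1)) else 0)"
    by (rule sol2_eq[OF A s])
  have cond: "0 < m \<Longrightarrow> (M \<le> m - 1 + min (k+1) M) = (M \<le> m + k)" by (auto simp: min_def)
  show "(\<lambda>(s,k) (m,d). if M \<le> m + k then f s (m,d) else 0) x (m, d) =
       (if m = 0 \<and> d = 0 then (\<lambda>(s,k). if M \<le> k then c s else 0) x else 0) +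
       (if 0 < m then \<Sum>e\<in>(\<lambda>(s,k). E1 s) x. (\<lambda>(s,k) (m,d). if M \<le> m + k then f s (m,d) else 0)
          ((\<lambda>(s, k) e. (t1 s e, min (k + 1) M)) x e) (m - 1, d) else 0) +
       (if 0 < d then \<Sum>e\<in>(\<lambda>(s,k). E2 s) x. (\<lambda>(s,k) (m,d). if M \<le> m + k then f s (m,d) else 0)
          ((\<lambda>(s, k) e. (t2 s e, k)) x e) (m, d - 1) else 0)"
  proof (cases "M \<le> m + k")
    case True
    then show ?thesis using fe cond by (auto simp: x)
  next
    case False
    then show ?thesis using cond by (auto simp: x)
  qed
qed

lemma V1_pow_mult_nth: "co (V1^n * F) i j k = (if n \<le> i then co F (i-n) j k else 0)"
proof (induction n arbitrary: i)
  case 0 then show ?case by simp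
next
  case (Suc n)
  have e: "V1^Suc n * F = V1 * (V1^n * F)" by (simp add: mult.assoc)
  show ?case unfolding e V1_mult_nth Suc by auto
qed

lemma V2_pow_mult_nth: "co (V2^n * F) i j k = (if n \<le> j then co F i (j-n) k else 0)"
proof (induction n arbitrary: j)
  case 0 then show ?case by simp
next
  case (Suc n)
  have e: "V2^Suc n * F = V2 * (V2^n * F)" by (simp add: mult.assoc)
  show ?case unfolding e V2_mult_nth Suc by auto
qed

lemma ratR_shift:
  assumes "ratR (toR H)"
  shows "ratR (toR (\<lambda>(i,j,k). if j1 \<le> i \<and> j2 \<le> j then H (i-j1, j-j2, k) else 0))"
proof -
  have "toR (\<lambda>(i,j,k). if j1 \<le> i \<and> j2 \<le> j then H (i-j1, j-j2, k) else 0) = V1^j1 * (V2^j2 * toR H)"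
    by (rule R3_ext) (simp add: V1_pow_mult_nth V2_pow_mult_nth)
  then show ?thesis using assms
    by (auto intro!: ratR_mult ratR_V simp del: power_Suc intro: ratR_pow)
qed


definition nsm :: "nat \<Rightarrow> monomial \<Rightarrow> monomial" where "nsm n g = (\<Sum>i<n. g)"

lemma nsm_0[simp]: "nsm 0 g = 0" by (simp add: nsm_def)
lemma nsm_Suc: "nsm (Suc n) g = nsm n g + g" by (simp add: nsm_def)
lemma nsm_add: "nsm (a + b) g = nsm a g + nsm b g"
  by (induction b) (simp_all add: nsm_Suc add.assoc)

definition phi :: "monomial list \<Rightarrow> (nat \<Rightarrow> nat) \<Rightarrow> monomial" where
  "phi gs c = (\<Sum>l<length gs. nsm (c l) (gs!l))"
definition vsum :: "nat \<Rightarrow> (nat \<Rightarrow> nat) \<Rightarrow> nat" where "vsum k c = (\<Sum>l<k. c l)"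
definition Vk :: "nat \<Rightarrow> (nat \<Rightarrow> nat) set" where "Vk k = {c. \<forall>l\<ge>k. c l = 0}"
definition lexl :: "(nat \<Rightarrow> nat) \<Rightarrow> (nat \<Rightarrow> nat) \<Rightarrow> bool" where
  "lexl x y \<longleftrightarrow> (\<exists>i. (\<forall>j<i. x j = y j) \<and> x i < y i)"
definition lev :: "(nat \<Rightarrow> nat) \<Rightarrow> (nat \<Rightarrow> nat) \<Rightarrow> bool" where
  "lev x y \<longleftrightarrow> (\<forall>l. x l \<le> y l)"
definition NM :: "monomial list \<Rightarrow> (nat \<Rightarrow> nat) set" where
  "NM gs = {c \<in> Vk (length gs). \<exists>c'\<in>Vk (length gs). vsum (length gs) c' = vsum (length gs) c
      \<and> phi gs c' = phi gs c \<and> lexl c' c}"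

lemma phi_inc: assumes "l < length gs"
  shows "phi gs (c(l := c l + 1)) = phi gs c + gs!l"
proof -
  have "phi gs (c(l := c l + 1)) = (\<Sum>i<length gs. nsm (c i) (gs!i) + (if i = l then gs!i else 0))"
    unfolding phi_def by (intro sum.cong) (auto simp: nsm_Suc)
  also have "\<dots> = phi gs c + gs!l"
    using assms by (simp add: sum.distrib phi_def)
  finally show ?thesis .
qed

lemma vsum_inc: assumes "l < k" shows "vsum k (c(l := c l + 1)) = vsum k c + 1"
proof -
  have "vsum k (c(l := c l + 1)) = (\<Sum>i<k. c i + (if i = l then 1 else 0))"
    unfolding vsum_def by (intro sum.cong) auto
  also have "\<dots> = vsum k c + 1"
    using assms by (simp add: sum.distrib vsum_def)
  finally show ?thesis .
qed

lemma phi_add: "phi gs (\<lambda>l. a l + b l) = phi gs a + phi gs b"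
  by (simp add: phi_def nsm_add sum.distrib)
lemma vsum_add: "vsum k (\<lambda>l. a l + b l) = vsum k a + vsum k b"
  by (simp add: vsum_def sum.distrib)

lemma Vk_zero: "c \<in> Vk k \<Longrightarrow> vsum k c = 0 \<Longrightarrow> c = (\<lambda>_. 0)"
proof
  fix l assume c: "c \<in> Vk k" "vsum k c = 0"
  show "c l = 0"
  proof (cases "l < k")
    case True then show ?thesis using c(2) unfolding vsum_def by simp
  next
    case False then show ?thesis using c(1) unfolding Vk_def by simp
  qed
qed

lemma vsum_pos: "vsum k c > 0 \<Longrightarrow> \<exists>l<k. c l > 0"
  unfolding vsum_def by (metis lessThan_iff not_gr0 sum.neutral)

lemma mon_pow_phi:
  assumes "set gs = G"
  shows "mon_pow G d = phi gs ` {c \<in> Vk (length gs). vsum (length gs) c = d}"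
proof (induction d)
  case 0
  have "{c \<in> Vk (length gs). vsum (length gs) c = 0} = {\<lambda>_. 0}"
    using Vk_zero by (auto simp: Vk_def vsum_def)
  then show ?case by (simp add: phi_def)
next
  case (Suc d)
  let ?k = "length gs"
  show ?case
  proof (intro equalityI subsetI)
    fix x assume "x \<in> mon_pow G (Suc d)"
    then obtain g u where x: "x = g + u" and g: "g \<in> G" and u: "u \<in> mon_pow G d" by auto
    obtain l where l: "l < ?k" "gs!l = g" using g assms by (auto simp: in_set_conv_nth)
    obtain c where c: "c \<in> Vk ?k" "vsum ?k c = d" "u = phi gs c" using u Suc by auto
    have "c(l := c l + 1) \<in> Vk ?k" using c(1) l(1) by (auto simp: Vk_def)
    moreover have "vsum ?k (c(l := c l + 1)) = Suc d" using vsum_inc[OF l(1)] c(2) by simp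
    moreover have "phi gs (c(l := c l + 1)) = x" using phi_inc[OF l(1)] c(3) l(2) x
      by (simp add: add.commute)
    ultimately show "x \<in> phi gs ` {c \<in> Vk ?k. vsum ?k c = Suc d}" by blast
  next
    fix x assume "x \<in> phi gs ` {c \<in> Vk ?k. vsum ?k c = Suc d}"
    then obtain c where c: "c \<in> Vk ?k" "vsum ?k c = Suc d" "x = phi gs c" by auto
    obtain l where l: "l < ?k" "c l > 0" using vsum_pos[of ?k c] c(2) by auto
    define c' where "c' = c(l := c l - 1)"
    have cc: "c = c'(l := c' l + 1)" using l(2) by (auto simp: c'_def)
    have "c' \<in> Vk ?k" using c(1) by (auto simp: Vk_def c'_def)
    moreover have "vsum ?k c' = d" using vsum_inc[OF l(1), of c'] c(2) cc by simp
    ultimately have "phi gs c' \<in> mon_pow G d" using Suc by auto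
    moreover have "x = gs!l + phi gs c'" using phi_inc[OF l(1), of c'] c(3) cc
      by (simp add: add.commute)
    moreover have "gs!l \<in> G" using assms l(1) by auto
    ultimately show "x \<in> mon_pow G (Suc d)" by auto
  qed
qed

lemma lexl_irrefl: "\<not> lexl x x" by (auto simp: lexl_def)

lemma lexl_trans: assumes "lexl x y" "lexl y z" shows "lexl x z"
proof -
  obtain i where i: "\<forall>j<i. x j = y j" "x i < y i" using assms(1) lexl_def by blast
  obtain j where j: "\<forall>l<j. y l = z l" "y j < z j" using assms(2) lexl_def by blast
  show ?thesis unfolding lexl_def
  proof (cases i j rule: linorder_cases)
    case less
    then show "\<exists>i. (\<forall>j<i. x j = z j) \<and> x i < z i" using i j by (intro exI[of _ i]) auto
  next
    case equal
    then show "\<exists>i. (\<forall>j<i. x j = z j) \<and> x i < z i" using i j by (intro exI[of _ i]) auto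
  next
    case greater
    then show "\<exists>i. (\<forall>j<i. x j = z j) \<and> x i < z i" using i j by (intro exI[of _ j]) auto
  qed
qed

lemma lexl_total: assumes "x \<noteq> y" shows "lexl x y \<or> lexl y x"
proof -
  obtain i0 where "x i0 \<noteq> y i0" using assms by auto
  define i where "i = (LEAST i. x i \<noteq> y i)"
  have 1: "x i \<noteq> y i" unfolding i_def by (rule LeastI) fact
  have 2: "\<forall>j<i. x j = y j" unfolding i_def using not_less_Least by blast
  show ?thesis
  proof (cases "x i < y i")
    case True then show ?thesis using 2 unfolding lexl_def by blast
  next
    case False then have "y i < x i" using 1 by simp
    then show ?thesis using 2 unfolding lexl_def by (metis)
  qed
qed

lemma lexl_add: "lexl x y \<Longrightarrow> lexl (\<lambda>l. x l + e l) (\<lambda>l. y l + e l)"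
  unfolding lexl_def by auto

lemma finite_box: "finite {c::nat \<Rightarrow> nat. (\<forall>l\<ge>k. c l = 0) \<and> (\<forall>l. c l \<le> K)}"
proof (induction k)
  case 0
  have "{c::nat \<Rightarrow> nat. (\<forall>l\<ge>0. c l = 0) \<and> (\<forall>l. c l \<le> K)} \<subseteq> {\<lambda>_. 0}" by auto
  then show ?case by (rule finite_subset) simp
next
  case (Suc k)
  have "{c::nat \<Rightarrow> nat. (\<forall>l\<ge>Suc k. c l = 0) \<and> (\<forall>l. c l \<le> K)} \<subseteq>
     (\<lambda>(c,x). c(k := x)) ` ({c::nat \<Rightarrow> nat. (\<forall>l\<ge>k. c l = 0) \<and> (\<forall>l. c l \<le> K)} \<times> {0..K})"
  proof
    fix c :: "nat \<Rightarrow> nat" assume c: "c \<in> {c. (\<forall>l\<ge>Suc k. c l = 0) \<and> (\<forall>l. c l \<le> K)}"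
    have "c = (\<lambda>(c,x). c(k := x)) (c(k := 0), c k)" by auto
    moreover have "(c(k := 0), c k) \<in> {c::nat \<Rightarrow> nat. (\<forall>l\<ge>k. c l = 0) \<and> (\<forall>l. c l \<le> K)} \<times> {0..K}"
    proof -
      have c1: "\<forall>l\<ge>Suc k. c l = 0" "\<forall>l. c l \<le> K" using c by blast+
      have "\<forall>l\<ge>k. (c(k := 0)) l = 0"
      proof (intro allI impI)
        fix l assume "k \<le> l"
        then show "(c(k := 0)) l = 0" using c1(1) by (cases "l = k") auto
      qed
      moreover have "\<forall>l. (c(k := 0)) l \<le> K" using c1(2) by simp
      moreover have "c k \<in> {0..K}" using c1(2) by simp
      ultimately show ?thesis by blast
    qed
    ultimately show "c \<in> (\<lambda>(c,x). c(k := x)) ` ({c::nat \<Rightarrow> nat. (\<forall>l\<ge>k. c l = 0) \<and> (\<forall>l. c l \<le> K)} \<times> {0..K})"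
      by blast
  qed
  then show ?case
    by (rule finite_subset[OF _ finite_imageI[OF finite_cartesian_product[OF Suc.IH finite_atLeastAtMost]]])
qed

lemma finite_fiber: "finite {c \<in> Vk k. vsum k c = d \<and> P c}"
proof -
  have "{c \<in> Vk k. vsum k c = d \<and> P c} \<subseteq> {c::nat \<Rightarrow> nat. (\<forall>l\<ge>k. c l = 0) \<and> (\<forall>l. c l \<le> d)}"
  proof
    fix c assume c: "c \<in> {c \<in> Vk k. vsum k c = d \<and> P c}"
    have le: "c l \<le> d" for l
    proof (cases "l < k")
      case True
      have "c l \<le> (\<Sum>l<k. c l)" using True by (intro member_le_sum) auto
      then show ?thesis using c unfolding vsum_def by simp
    next
      case False then show ?thesis using c by (simp add: Vk_def)
    qed
    show "c \<in> {c::nat \<Rightarrow> nat. (\<forall>l\<ge>k. c l = 0) \<and> (\<forall>l. c l \<le> d)}"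
      using c le by (simp add: Vk_def)
  qed
  then show ?thesis by (rule finite_subset[OF _ finite_box])
qed

lemma lexl_min:
  assumes "finite A" "A \<noteq> {}"
  shows "\<exists>z\<in>A. \<forall>y\<in>A. \<not> lexl y z"
  using assms
proof (induction A rule: finite_ne_induct)
  case (singleton x) then show ?case using lexl_irrefl by auto
next
  case (insert x F)
  then obtain z where z: "z \<in> F" "\<forall>y\<in>F. \<not> lexl y z" by blast
  show ?case
  proof (cases "lexl x z")
    case True
    have "\<forall>y\<in>insert x F. \<not> lexl y x"
      using z True lexl_trans lexl_irrefl by blast
    then show ?thesis by blast
  next
    case False then show ?thesis using z by blast
  qed
qed

lemma card_mon_pow_good:
  assumes "set gs = G"
  shows "card (mon_pow G d) = card {c \<in> Vk (length gs) - NM gs. vsum (length gs) c = d}"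
proof -
  let ?k = "length gs"
  let ?D = "{c \<in> Vk ?k - NM gs. vsum ?k c = d}"
  have "bij_betw (phi gs) ?D (mon_pow G d)"
    unfolding bij_betw_def
  proof (intro conjI)
    show "inj_on (phi gs) ?D"
    proof (rule inj_onI, rule ccontr)
      fix x y assume x: "x \<in> ?D" and y: "y \<in> ?D" and e: "phi gs x = phi gs y" and ne: "x \<noteq> y"
      show False
      proof (cases "lexl x y")
        case True
        then have "y \<in> NM gs" using x y e unfolding NM_def by auto
        then show False using y by auto
      next
        case False
        then have "lexl y x" using lexl_total[OF ne] by simp
        then have "x \<in> NM gs" using x y e unfolding NM_def by auto
        then show False using x by auto
      qed
    qed
    show "phi gs ` ?D = mon_pow G d"
    proof (intro equalityI subsetI)
      fix u assume "u \<in> phi gs ` ?D"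
      then show "u \<in> mon_pow G d" unfolding mon_pow_phi[OF assms] by auto
    next
      fix u assume "u \<in> mon_pow G d"
      then obtain c0 where c0: "c0 \<in> Vk ?k" "vsum ?k c0 = d" "phi gs c0 = u"
        unfolding mon_pow_phi[OF assms] by auto
      let ?F = "{c \<in> Vk ?k. vsum ?k c = d \<and> phi gs c = u}"
      have "finite ?F" by (rule finite_fiber)
      moreover have "?F \<noteq> {}" using c0 by auto
      ultimately obtain z where z: "z \<in> ?F" "\<forall>y\<in>?F. \<not> lexl y z" using lexl_min by meson
      have "z \<notin> NM gs"
      proof
        assume "z \<in> NM gs"
        then obtain c' where "c' \<in> Vk ?k" "vsum ?k c' = vsum ?k z" "phi gs c' = phi gs z" "lexl c' z"
          unfolding NM_def by auto
        then show False using z by auto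
      qed
      then show "u \<in> phi gs ` ?D" using z by auto
    qed
  qed
  then show ?thesis by (simp add: bij_betw_same_card)
qed

lemma NM_up:
  assumes "c \<in> NM gs" "e \<in> Vk (length gs)"
  shows "(\<lambda>l. c l + e l) \<in> NM gs"
proof -
  obtain c' where c': "c' \<in> Vk (length gs)" "vsum (length gs) c' = vsum (length gs) c"
    "phi gs c' = phi gs c" "lexl c' c" "c \<in> Vk (length gs)"
    using assms(1) unfolding NM_def by auto
  show ?thesis unfolding NM_def
  proof (intro CollectI conjI bexI[of _ "\<lambda>l. c' l + e l"])
    show "(\<lambda>l. c l + e l) \<in> Vk (length gs)" "(\<lambda>l. c' l + e l) \<in> Vk (length gs)"
      using c' assms(2) by (auto simp: Vk_def)
    show "vsum (length gs) (\<lambda>l. c' l + e l) = vsum (length gs) (\<lambda>l. c l + e l)"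
      using c' by (simp add: vsum_add)
    show "phi gs (\<lambda>l. c' l + e l) = phi gs (\<lambda>l. c l + e l)"
      using c' by (simp add: phi_add)
    show "lexl (\<lambda>l. c' l + e l) (\<lambda>l. c l + e l)" using c' lexl_add by blast
  qed
qed


lemma nat_subseq: "\<exists>\<tau>. strict_mono \<tau> \<and> (\<forall>n. (s::nat \<Rightarrow> nat) (\<tau> n) \<le> s (\<tau> (Suc n)))"
proof -
  obtain f where f1: "strict_mono f" and f2: "monoseq (\<lambda>n. s (f n))"
    using seq_monosub[of s] by blast
  from f2 have "(\<forall>n. s (f n) \<le> s (f (Suc n))) \<or> (\<forall>n. s (f (Suc n)) \<le> s (f n))"
    by (simp add: monoseq_Suc)
  then show ?thesis
  proof
    assume "\<forall>n. s (f n) \<le> s (f (Suc n))"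
    with f1 show ?thesis by blast
  next
    assume dec: "\<forall>n. s (f (Suc n)) \<le> s (f n)"
    obtain N where N: "\<And>y. s (f N) \<le> s (f y)"
      using ex_has_least_nat[of "\<lambda>_. True" 0 "\<lambda>n. s (f n)"] by auto
    have eq: "s (f n) = s (f N)" if "N \<le> n" for n
    proof -
      have "s (f n) \<le> s (f N)"
        by (rule lift_Suc_antimono_le[of "\<lambda>n. s (f n)"]) (use dec that in simp_all)
      then show ?thesis using N[of n] by simp
    qed
    have "strict_mono (\<lambda>n. f (N + n))"
      using f1 unfolding strict_mono_def by simp
    moreover have "\<forall>n. s (f (N + n)) \<le> s (f (N + Suc n))"
    proof
      fix n
      have "s (f (N + n)) = s (f N)" "s (f (N + Suc n)) = s (f N)" by (rule eq, simp)+
      then show "s (f (N + n)) \<le> s (f (N + Suc n))" by simp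
    qed
    ultimately show ?thesis by (intro exI[of _ "\<lambda>n. f (N + n)"]) simp
  qed
qed

lemma dickson_seq: "\<exists>\<sigma>. strict_mono \<sigma> \<and> (\<forall>l<k. \<forall>n. (x::nat \<Rightarrow> nat \<Rightarrow> nat) (\<sigma> n) l \<le> x (\<sigma> (Suc n)) l)"
proof (induction k)
  case 0
  have "strict_mono (id::nat \<Rightarrow> nat)" by (simp add: strict_mono_def)
  then show ?case by blast
next
  case (Suc k)
  then obtain \<sigma> where \<sigma>: "strict_mono \<sigma>" "\<forall>l<k. \<forall>n. x (\<sigma> n) l \<le> x (\<sigma> (Suc n)) l" by blast
  obtain \<tau> where \<tau>: "strict_mono \<tau>" "\<forall>n. x (\<sigma> (\<tau> n)) k \<le> x (\<sigma> (\<tau> (Suc n))) k"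
    using nat_subseq[of "\<lambda>n. x (\<sigma> n) k"] by blast
  have "strict_mono (\<sigma> \<circ> \<tau>)" using \<sigma>(1) \<tau>(1) by (rule strict_mono_o)
  moreover have "\<forall>l<Suc k. \<forall>n. x ((\<sigma> \<circ> \<tau>) n) l \<le> x ((\<sigma> \<circ> \<tau>) (Suc n)) l"
  proof (intro allI impI)
    fix l n assume l: "l < Suc k"
    show "x ((\<sigma> \<circ> \<tau>) n) l \<le> x ((\<sigma> \<circ> \<tau>) (Suc n)) l"
    proof (cases "l < k")
      case True
      have "\<tau> n \<le> \<tau> (Suc n)" using \<tau>(1) by (simp add: strict_mono_less_eq)
      then show ?thesis
        using lift_Suc_mono_le[of "\<lambda>m. x (\<sigma> m) l"] \<sigma>(2) True by simp
    next
      case False then have "l = k" using l by simp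
      then show ?thesis using \<tau>(2) by simp
    qed
  qed
  ultimately show ?case by blast
qed

lemma antichain_finite:
  assumes "A \<subseteq> Vk k" "\<forall>a\<in>A. \<forall>b\<in>A. lev a b \<longrightarrow> a = b"
  shows "finite A"
proof (rule ccontr)
  assume "infinite A"
  then obtain f :: "nat \<Rightarrow> nat \<Rightarrow> nat" where f: "inj f" "range f \<subseteq> A"
    using infinite_countable_subset by blast
  obtain \<sigma> where \<sigma>: "strict_mono \<sigma>" "\<forall>l<k. \<forall>n. f (\<sigma> n) l \<le> f (\<sigma> (Suc n)) l"
    using dickson_seq by blast
  have inA: "f (\<sigma> 0) \<in> A" "f (\<sigma> 1) \<in> A" using f(2) by auto
  have "lev (f (\<sigma> 0)) (f (\<sigma> 1))"
    unfolding lev_def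
  proof
    fix l show "f (\<sigma> 0) l \<le> f (\<sigma> 1) l"
    proof (cases "l < k")
      case True then show ?thesis using \<sigma>(2) by (metis One_nat_def)
    next
      case False then show ?thesis using inA assms(1) by (auto simp: Vk_def)
    qed
  qed
  then have "f (\<sigma> 0) = f (\<sigma> 1)" using assms(2) inA by blast
  then have "\<sigma> 0 = \<sigma> 1" using f(1) by (simp add: inj_eq)
  moreover have "\<sigma> 0 < \<sigma> 1" using \<sigma>(1) by (simp add: strict_mono_def)
  ultimately show False by simp
qed

definition basis :: "monomial list \<Rightarrow> (nat \<Rightarrow> nat) set" where
  "basis gs = {b \<in> NM gs. \<forall>b'\<in>NM gs. lev b' b \<longrightarrow> b' = b}"

lemma NM_Vk: "NM gs \<subseteq> Vk (length gs)" unfolding NM_def by auto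

lemma basis_finite: "finite (basis gs)"
proof (rule antichain_finite[of _ "length gs"])
  show "basis gs \<subseteq> Vk (length gs)" using NM_Vk unfolding basis_def by auto
  show "\<forall>a\<in>basis gs. \<forall>b\<in>basis gs. lev a b \<longrightarrow> a = b" unfolding basis_def by auto
qed

lemma NM_iff:
  assumes c: "c \<in> Vk (length gs)"
  shows "c \<in> NM gs \<longleftrightarrow> (\<exists>b\<in>basis gs. lev b c)"
proof
  let ?k = "length gs"
  assume "c \<in> NM gs"
  have "lev c c" by (simp add: lev_def)
  then obtain b where b: "b \<in> NM gs" "lev b c" "\<forall>y. y \<in> NM gs \<and> lev y c \<longrightarrow> vsum ?k b \<le> vsum ?k y"
    using ex_has_least_nat[of "\<lambda>b. b \<in> NM gs \<and> lev b c" c "vsum ?k"] \<open>c \<in> NM gs\<close> by blast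
  have "b \<in> basis gs" unfolding basis_def
  proof (intro CollectI conjI ballI impI)
    show "b \<in> NM gs" by fact
    fix b' assume b': "b' \<in> NM gs" "lev b' b"
    then have "lev b' c" using b(2) by (auto simp: lev_def intro: order_trans)
    then have le: "vsum ?k b \<le> vsum ?k b'" using b(3) b'(1) by blast
    show "b' = b"
    proof (rule ccontr)
      assume "b' \<noteq> b"
      then obtain l where l: "b' l \<noteq> b l" by auto
      then have "b' l < b l" using b'(2) by (simp add: lev_def le_neq_implies_less)
      moreover have "l < ?k"
      proof (rule ccontr)
        assume "\<not> l < ?k"
        moreover have "b' \<in> Vk ?k" "b \<in> Vk ?k" using b'(1) b(1) NM_Vk by blast+
        ultimately have "b' l = 0" "b l = 0" by (simp_all add: Vk_def)
        then show False using l by simp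
      qed
      ultimately have "vsum ?k b' < vsum ?k b"
        unfolding vsum_def using b'(2)
        by (intro sum_strict_mono_ex1) (auto simp: lev_def)
      then show False using le by simp
    qed
  qed
  then show "\<exists>b\<in>basis gs. lev b c" using b(2) by blast
next
  assume "\<exists>b\<in>basis gs. lev b c"
  then obtain b where b: "b \<in> NM gs" "lev b c" unfolding basis_def by auto
  have "(\<lambda>l. b l + (c l - b l)) \<in> NM gs"
    by (rule NM_up[OF b(1)]) (use c in \<open>auto simp: Vk_def\<close>)
  moreover have "(\<lambda>l. b l + (c l - b l)) = c" using b(2) by (auto simp: lev_def fun_eq_iff)
  ultimately show "c \<in> NM gs" by simp
qed


definition Cset :: "nat \<Rightarrow> (nat \<Rightarrow> nat) set \<Rightarrow> nat \<Rightarrow> (nat \<Rightarrow> nat) \<Rightarrow> nat \<Rightarrow> (nat \<Rightarrow> nat) set" where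
  "Cset k B i v d = {c. (\<forall>l. (l < i \<or> k \<le> l) \<longrightarrow> c l = 0) \<and> vsum k c = d \<and>
      \<not> (\<exists>b\<in>B. lev b (\<lambda>l. v l + c l))}"

lemma Cset_finite: "finite (Cset k B i v d)"
proof -
  have "Cset k B i v d \<subseteq> {c \<in> Vk k. vsum k c = d \<and> True}"
    unfolding Cset_def Vk_def by auto
  then show ?thesis by (rule finite_subset[OF _ finite_fiber])
qed

lemma Cset_cap:
  assumes "\<forall>b\<in>B. \<forall>l. b l \<le> K"
  shows "Cset k B i (\<lambda>l. min (w l) K) d = Cset k B i w d"
proof -
  have "lev b (\<lambda>l. min (w l) K + c l) \<longleftrightarrow> lev b (\<lambda>l. w l + c l)" if "b \<in> B" for b c
  proof -
    have "b l \<le> min (w l) K + c l \<longleftrightarrow> b l \<le> w l + c l" for l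
    proof -
      have "b l \<le> K" using assms that by blast
      then show ?thesis by (cases "w l \<le> K") (auto simp: min_def)
    qed
    then show ?thesis unfolding lev_def by blast
  qed
  then show ?thesis unfolding Cset_def by blast
qed

lemma Cset_0: "i \<le> k \<Longrightarrow> Cset k B i v 0 = (if \<exists>b\<in>B. lev b v then {} else {\<lambda>_. 0})"
proof -
  have "c \<in> Cset k B i v 0 \<longleftrightarrow> c = (\<lambda>_. 0) \<and> \<not> (\<exists>b\<in>B. lev b v)" for c
  proof
    assume c: "c \<in> Cset k B i v 0"
    then have "c \<in> Vk k" "vsum k c = 0" unfolding Cset_def Vk_def by auto
    then have "c = (\<lambda>_. 0)" by (rule Vk_zero)
    then show "c = (\<lambda>_. 0) \<and> \<not> (\<exists>b\<in>B. lev b v)" using c unfolding Cset_def by auto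
  next
    assume "c = (\<lambda>_. 0) \<and> \<not> (\<exists>b\<in>B. lev b v)"
    then show "c \<in> Cset k B i v 0" unfolding Cset_def by (auto simp: vsum_def)
  qed
  then show "i \<le> k \<Longrightarrow> ?thesis" by auto
qed

lemma Cset_elem: "c \<in> Cset k B j w e \<Longrightarrow> (c(j := c j + 1)) j > 0 \<and> (\<forall>l<j. (c(j := c j + 1)) l = 0)"
  unfolding Cset_def by auto

lemma Cset_rec:
  assumes d: "0 < d"
  shows "card (Cset k B i v d) = (\<Sum>j\<in>{i..<k}. card (Cset k B j (v(j := v j + 1)) (d - 1)))"
proof -
  let ?g = "\<lambda>(j::nat) (c'::nat \<Rightarrow> nat). c'(j := c' j + 1)"
  let ?A = "\<lambda>j. ?g j ` Cset k B j (v(j := v j + 1)) (d - 1)"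
  have eq: "Cset k B i v d = (\<Union>j\<in>{i..<k}. ?A j)"
  proof (intro equalityI subsetI)
    fix c assume c: "c \<in> Cset k B i v d"
    then have c0: "\<forall>l. (l < i \<or> k \<le> l) \<longrightarrow> c l = 0" "vsum k c = d" "\<not> (\<exists>b\<in>B. lev b (\<lambda>l. v l + c l))"
      unfolding Cset_def by auto
    obtain l0 where l0: "l0 < k" "c l0 > 0" using vsum_pos[of k c] c0(2) d by auto
    define j where "j = (LEAST l. c l > 0)"
    have cj: "c j > 0" unfolding j_def by (rule LeastI[of _ l0]) (rule l0(2))
    have below: "\<forall>l<j. c l = 0" unfolding j_def using not_less_Least by blast
    have "j \<le> l0" unfolding j_def by (rule Least_le) (rule l0(2))
    then have jk: "j < k" using l0(1) by simp
    have ij: "i \<le> j"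
    proof (rule ccontr)
      assume "\<not> i \<le> j"
      then have "c j = 0" using c0(1) by simp
      then show False using cj by simp
    qed
    define c' where "c' = c(j := c j - 1)"
    have cc: "c = c'(j := c' j + 1)" using cj by (auto simp: c'_def)
    have c'mem: "c' \<in> Cset k B j (v(j := v j + 1)) (d - 1)"
      unfolding Cset_def
    proof (intro CollectI conjI allI impI)
      fix l assume "l < j \<or> k \<le> l"
      then show "c' l = 0" using below c0(1) jk by (auto simp: c'_def)
    next
      have "vsum k c = vsum k c' + 1" using vsum_inc[OF jk, of c'] cc by simp
      then show "vsum k c' = d - 1" using c0(2) by simp
    next
      have "(\<lambda>l. (v(j := v j + 1)) l + c' l) = (\<lambda>l. v l + c l)"
        using cj by (auto simp: c'_def fun_eq_iff)
      then show "\<not> (\<exists>b\<in>B. lev b (\<lambda>l. (v(j := v j + 1)) l + c' l))" using c0(3) by simp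
    qed
    have "c \<in> ?A j" using cc c'mem by (rule image_eqI)
    moreover have "j \<in> {i..<k}" using ij jk by simp
    ultimately show "c \<in> (\<Union>j\<in>{i..<k}. ?A j)" by (rule UN_I[rotated])
  next
    fix c assume "c \<in> (\<Union>j\<in>{i..<k}. ?A j)"
    then obtain j where j0: "j \<in> {i..<k}" and cA: "c \<in> ?A j" by (rule UN_E)
    from cA obtain c' where cc: "c = c'(j := c' j + 1)" and c': "c' \<in> Cset k B j (v(j := v j + 1)) (d - 1)"
      by (rule imageE)
    have j: "i \<le> j" "j < k" using j0 by auto
    have c0: "\<forall>l. (l < j \<or> k \<le> l) \<longrightarrow> c' l = 0" "vsum k c' = d - 1"
      "\<not> (\<exists>b\<in>B. lev b (\<lambda>l. (v(j := v j + 1)) l + c' l))"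
      using c' unfolding Cset_def by auto
    show "c \<in> Cset k B i v d"
      unfolding Cset_def
    proof (intro CollectI conjI allI impI)
      fix l assume "l < i \<or> k \<le> l"
      then show "c l = 0" using c0(1) j by (auto simp: cc)
    next
      show "vsum k c = d" using vsum_inc[OF j(2), of c'] c0(2) d cc by simp
    next
      have "(\<lambda>l. (v(j := v j + 1)) l + c' l) = (\<lambda>l. v l + c l)"
        by (auto simp: cc fun_eq_iff)
      then show "\<not> (\<exists>b\<in>B. lev b (\<lambda>l. v l + c l))" using c0(3) by simp
    qed
  qed
  have inj: "inj_on (?g j) (X :: (nat \<Rightarrow> nat) set)" for j X
  proof (rule inj_onI)
    fix x y :: "nat \<Rightarrow> nat" assume "x(j := x j + 1) = y(j := y j + 1)"
    then have "(x(j := x j + 1)) l = (y(j := y j + 1)) l" for l by simp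
    then have "x l = y l" for l
    proof -
      assume H: "\<And>l. (x(j := x j + 1)) l = (y(j := y j + 1)) l"
      show "x l = y l"
      proof (cases "l = j")
        case True then show ?thesis using H[of j] by simp
      next
        case False then show ?thesis using H[of l] by simp
      qed
    qed
    then show "x = y" by auto
  qed
  have disj: "\<forall>j1\<in>{i..<k}. \<forall>j2\<in>{i..<k}. j1 \<noteq> j2 \<longrightarrow> ?A j1 \<inter> ?A j2 = {}"
  proof (intro ballI impI equalityI subsetI)
    fix j1 j2 x assume "j1 \<noteq> j2" and x: "x \<in> ?A j1 \<inter> ?A j2"
    obtain y1 where y1: "y1 \<in> Cset k B j1 (v(j1 := v j1 + 1)) (d - 1)" "x = ?g j1 y1" using x by blast
    obtain y2 where y2: "y2 \<in> Cset k B j2 (v(j2 := v j2 + 1)) (d - 1)" "x = ?g j2 y2" using x by blast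
    have x1: "x j1 > 0 \<and> (\<forall>l<j1. x l = 0)" using Cset_elem[OF y1(1)] y1(2) by simp
    have x2: "x j2 > 0 \<and> (\<forall>l<j2. x l = 0)" using Cset_elem[OF y2(1)] y2(2) by simp
    show "x \<in> {}"
    proof (cases "j1 < j2")
      case True then show ?thesis using x1 x2 by auto
    next
      case False then have "j2 < j1" using \<open>j1 \<noteq> j2\<close> by simp
      then show ?thesis using x1 x2 by auto
    qed
  qed simp
  have "card (Cset k B i v d) = (\<Sum>j\<in>{i..<k}. card (?A j))"
    unfolding eq by (rule card_UN_disjoint[OF _ _ disj]) (simp_all add: Cset_finite)
  also have "\<dots> = (\<Sum>j\<in>{i..<k}. card (Cset k B j (v(j := v j + 1)) (d - 1)))"
    by (intro sum.cong refl card_image inj)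
  finally show ?thesis .
qed

lemma mp_sys:
  assumes "finite G"
  shows "\<exists>ST c (E1 :: nat \<times> (nat \<Rightarrow> nat) \<Rightarrow> nat set) t1 (E2 :: nat \<times> (nat \<Rightarrow> nat) \<Rightarrow> nat set) t2
     (f :: nat \<times> (nat \<Rightarrow> nat) \<Rightarrow> nat \<times> nat \<Rightarrow> int) s0.
     sol2 ST c E1 t1 E2 t2 f \<and> s0 \<in> ST \<and> (\<forall>m d. f s0 (m,d) = (if m = 0 then int (card (mon_pow G d)) else 0))"
proof -
  obtain gs where gs: "set gs = G" using assms finite_list by blast
  define k where "k = length gs"
  define B where "B = basis gs"
  define K where "K = (\<Sum>b\<in>B. vsum k b)"
  have Bfin: "finite B" unfolding B_def by (rule basis_finite)
  have BV: "B \<subseteq> Vk k" unfolding B_def basis_def k_def using NM_Vk by blast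
  have bK: "\<forall>b\<in>B. \<forall>l. b l \<le> K"
  proof (intro ballI allI)
    fix b l assume b: "b \<in> B"
    show "b l \<le> K"
    proof (cases "l < k")
      case True
      have "b l \<le> vsum k b" unfolding vsum_def using True by (intro member_le_sum) auto
      also have "\<dots> \<le> K" unfolding K_def using Bfin b by (intro member_le_sum) auto
      finally show ?thesis .
    next
      case False then show ?thesis using b BV by (auto simp: Vk_def)
    qed
  qed
  define Caps where "Caps = {v::nat \<Rightarrow> nat. (\<forall>l\<ge>k. v l = 0) \<and> (\<forall>l. v l \<le> K)}"
  define ST where "ST = {0..k} \<times> Caps"
  define c where "c = (\<lambda>(i::nat, v). if \<exists>b\<in>B. lev b v then 0 else (1::int))"
  define E1 where "E1 = (\<lambda>x::nat \<times> (nat \<Rightarrow> nat). {} :: nat set)"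
  define t1 where "t1 = (\<lambda>(x::nat \<times> (nat \<Rightarrow> nat)) (e::nat). x)"
  define E2 where "E2 = (\<lambda>(i::nat, v::nat \<Rightarrow> nat). {i..<k})"
  define t2 where "t2 = (\<lambda>(i::nat, v::nat \<Rightarrow> nat) j. (j, \<lambda>l. min ((v(j := v j + 1)) l) K))"
  define f where "f = (\<lambda>(i, v) (m::nat, d). if m = 0 then int (card (Cset k B i v d)) else 0)"
  have "sol2 ST c E1 t1 E2 t2 f"
    unfolding sol2_def
  proof (intro conjI ballI allI)
    show "finite ST" unfolding ST_def Caps_def using finite_box by blast
    fix x assume "x \<in> ST"
    then obtain i v where x: "x = (i, v)" and i: "i \<le> k" and v: "v \<in> Caps" unfolding ST_def by auto
    show "finite (E1 x)" "finite (E2 x)" by (auto simp: E1_def E2_def x)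
    show "t1 x ` E1 x \<subseteq> ST" by (simp add: E1_def)
    show "t2 x ` E2 x \<subseteq> ST"
    proof
      fix y assume "y \<in> t2 x ` E2 x"
      then obtain j where j: "i \<le> j" "j < k" and y: "y = (j, \<lambda>l. min ((v(j := v j + 1)) l) K)"
        by (auto simp: t2_def E2_def x)
      have "(\<lambda>l. min ((v(j := v j + 1)) l) K) \<in> Caps" using v j unfolding Caps_def by auto
      then show "y \<in> ST" using y j unfolding ST_def by auto
    qed
    fix m d
    show "f x (m, d) = (if m = 0 \<and> d = 0 then c x else 0) +
          (if 0 < m then \<Sum>e\<in>E1 x. f (t1 x e) (m - 1, d) else 0) +
          (if 0 < d then \<Sum>e\<in>E2 x. f (t2 x e) (m, d - 1) else 0)"
    proof (cases "m = 0")
      case False then show ?thesis by (simp add: f_def x E1_def t2_def case_prod_beta)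
    next
      case m: True
      show ?thesis
      proof (cases "d = 0")
        case True then show ?thesis using m i by (simp add: f_def x c_def Cset_0)
      next
        case False
        then have "card (Cset k B i v d) = (\<Sum>j\<in>{i..<k}. card (Cset k B j (v(j := v j + 1)) (d - 1)))"
          by (intro Cset_rec) simp
        also have "\<dots> = (\<Sum>j\<in>{i..<k}. card (Cset k B j (\<lambda>l. min ((v(j := v j + 1)) l) K) (d - 1)))"
          by (intro sum.cong refl arg_cong[where f=card] Cset_cap[OF bK, symmetric])
        finally show ?thesis using m False
          by (simp add: f_def x E2_def t2_def of_nat_sum)
      qed
    qed
  qed
  moreover have "(0, \<lambda>_. 0) \<in> ST" unfolding ST_def Caps_def by auto
  moreover have "f (0, \<lambda>_. 0) (m,d) = (if m = 0 then int (card (mon_pow G d)) else 0)" for m d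
  proof -
    have "Cset k B 0 (\<lambda>_. 0) d = {c \<in> Vk (length gs) - NM gs. vsum (length gs) c = d}"
    proof -
      have "c \<in> Cset k B 0 (\<lambda>_. 0) d \<longleftrightarrow> c \<in> {c \<in> Vk (length gs) - NM gs. vsum (length gs) c = d}" for c
      proof (cases "c \<in> Vk k")
        case True
        have "(\<lambda>l. 0 + c l) = c" by simp
        then show ?thesis using NM_iff[of c gs] True unfolding Cset_def B_def k_def Vk_def by auto
      next
        case False then show ?thesis unfolding Cset_def Vk_def k_def by auto
      qed
      then show ?thesis by blast
    qed
    then show ?thesis using card_mon_pow_good[OF gs] by (simp add: f_def)
  qed
  ultimately show ?thesis by blast
qed


lemma mon_pow_segre:
  "mon_pow (segre_gens GA GB) d = {u + v | u v. u \<in> mon_pow GA d \<and> v \<in> mon_pow GB d}"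
proof (induction d)
  case 0 then show ?case by simp
next
  case (Suc d)
  show ?case
  proof (intro equalityI subsetI)
    fix x assume "x \<in> mon_pow (segre_gens GA GB) (Suc d)"
    then obtain g w where x: "x = g + w" and g: "g \<in> segre_gens GA GB" and w: "w \<in> mon_pow (segre_gens GA GB) d"
      by auto
    obtain a b where ab: "g = a + b" "a \<in> GA" "b \<in> GB" using g unfolding segre_gens_def by auto
    have "w \<in> {u + v | u v. u \<in> mon_pow GA d \<and> v \<in> mon_pow GB d}" using w unfolding Suc.IH .
    then obtain u v where uv: "w = u + v" "u \<in> mon_pow GA d" "v \<in> mon_pow GB d" by blast
    have "x = (a + u) + (b + v)" using x ab uv by (simp add: algebra_simps)
    moreover have "a + u \<in> mon_pow GA (Suc d)" "b + v \<in> mon_pow GB (Suc d)" using ab uv by auto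
    ultimately show "x \<in> {u + v | u v. u \<in> mon_pow GA (Suc d) \<and> v \<in> mon_pow GB (Suc d)}" by blast
  next
    fix x assume "x \<in> {u + v | u v. u \<in> mon_pow GA (Suc d) \<and> v \<in> mon_pow GB (Suc d)}"
    then obtain u v where x: "x = u + v" and u: "u \<in> mon_pow GA (Suc d)" and v: "v \<in> mon_pow GB (Suc d)"
      by blast
    obtain a u' where au: "u = a + u'" "a \<in> GA" "u' \<in> mon_pow GA d" using u by auto
    obtain b v' where bv: "v = b + v'" "b \<in> GB" "v' \<in> mon_pow GB d" using v by auto
    have "x = (a + b) + (u' + v')" using x au bv by (simp add: algebra_simps)
    moreover have "a + b \<in> segre_gens GA GB" using au bv unfolding segre_gens_def by blast
    moreover have "u' + v' \<in> {u + v | u v. u \<in> mon_pow GA d \<and> v \<in> mon_pow GB d}" using au bv by blast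
    then have "u' + v' \<in> mon_pow (segre_gens GA GB) d" unfolding Suc.IH .
    ultimately show "x \<in> mon_pow (segre_gens GA GB) (Suc d)" by (simp, blast)
  qed
qed

lemma mon_pow_keys:
  assumes "\<forall>g\<in>G. Poly_Mapping.keys g \<subseteq> S"
  shows "u \<in> mon_pow G d \<Longrightarrow> Poly_Mapping.keys u \<subseteq> S"
proof (induction d arbitrary: u)
  case 0 then show ?case by simp
next
  case (Suc d)
  then obtain g w where gw: "u = g + w" "g \<in> G" "w \<in> mon_pow G d" by auto
  have "Poly_Mapping.keys w \<subseteq> S" using Suc.IH gw(3) .
  moreover have "Poly_Mapping.keys g \<subseteq> S" using assms gw(2) by blast
  ultimately show ?case using gw(1) keys_add[of g w] by blast
qed

definition Xvars :: "var set" where "Xvars = {v. \<exists>i j. v = X i j}"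
definition Yvars :: "var set" where "Yvars = {v. \<exists>i j. v = Y i j}"

lemma sum_inj_XY:
  assumes "Poly_Mapping.keys u \<subseteq> Xvars" "Poly_Mapping.keys u' \<subseteq> Xvars"
    "Poly_Mapping.keys v \<subseteq> Yvars" "Poly_Mapping.keys v' \<subseteq> Yvars" "u + v = u' + v'"
  shows "u = u' \<and> v = v'"
proof -
  have l: "Poly_Mapping.lookup u x + Poly_Mapping.lookup v x = Poly_Mapping.lookup u' x + Poly_Mapping.lookup v' x" for x
    using arg_cong[OF assms(5), of "\<lambda>f. Poly_Mapping.lookup f x"] by (simp add: lookup_add)
  have "Poly_Mapping.lookup u x = Poly_Mapping.lookup u' x \<and> Poly_Mapping.lookup v x = Poly_Mapping.lookup v' x" for x
  proof (cases "x \<in> Xvars")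
    case True
    then have "x \<notin> Yvars" unfolding Xvars_def Yvars_def by auto
    then have "x \<notin> Poly_Mapping.keys v" "x \<notin> Poly_Mapping.keys v'" using assms(3,4) by blast+
    then have "Poly_Mapping.lookup v x = 0" "Poly_Mapping.lookup v' x = 0" by (simp_all add: in_keys_iff)
    then show ?thesis using l[of x] by simp
  next
    case False
    then have "x \<notin> Poly_Mapping.keys u" "x \<notin> Poly_Mapping.keys u'" using assms(1,2) by blast+
    then have "Poly_Mapping.lookup u x = 0" "Poly_Mapping.lookup u' x = 0" by (simp_all add: in_keys_iff)
    then show ?thesis using l[of x] by simp
  qed
  then show ?thesis by (auto intro: poly_mapping_eqI)
qed

lemma segre_bij:
  assumes "\<forall>g\<in>GA. Poly_Mapping.keys g \<subseteq> Xvars" "\<forall>g\<in>GB. Poly_Mapping.keys g \<subseteq> Yvars"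
  shows "bij_betw (\<lambda>(u,v). u + v) (mon_pow GA d \<times> mon_pow GB d) (mon_pow (segre_gens GA GB) d)"
  unfolding bij_betw_def
proof
  show "inj_on (\<lambda>(u,v). u + v) (mon_pow GA d \<times> mon_pow GB d)"
  proof (rule inj_onI, clarify)
    fix u v u' v' assume "u \<in> mon_pow GA d" "v \<in> mon_pow GB d" "u' \<in> mon_pow GA d" "v' \<in> mon_pow GB d"
      "u + v = u' + v'"
    then show "u = u' \<and> v = v'"
      by (intro sum_inj_XY mon_pow_keys[OF assms(1)] mon_pow_keys[OF assms(2)])
  qed
  show "(\<lambda>(u,v). u + v) ` (mon_pow GA d \<times> mon_pow GB d) = mon_pow (segre_gens GA GB) d"
    unfolding mon_pow_segre by force
qed

lemma one_filtration_X:
  "one_filtration X c d1 m0 G \<Longrightarrow> m0 \<le> m \<Longrightarrow> \<forall>g\<in>G m. Poly_Mapping.keys g \<subseteq> Xvars"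
  unfolding one_filtration_def Xvars_def by blast
lemma one_filtration_Y:
  "one_filtration Y c d1 m0 G \<Longrightarrow> m0 \<le> m \<Longrightarrow> \<forall>g\<in>G m. Poly_Mapping.keys g \<subseteq> Yvars"
  unfolding one_filtration_def Yvars_def by blast

definition projA :: "seg_letter list \<Rightarrow> (nat + nat) list" where
  "projA w = concat (map (\<lambda>x. case x of T1 i \<Rightarrow> [Inl i] | T2 _ \<Rightarrow> [] | Gam i j \<Rightarrow> [Inr i]) w)"
definition projB :: "seg_letter list \<Rightarrow> (nat + nat) list" where
  "projB w = concat (map (\<lambda>x. case x of T1 _ \<Rightarrow> [] | T2 i \<Rightarrow> [Inl i] | Gam i j \<Rightarrow> [Inr j]) w)"

definition segw :: "(nat list \<times> nat) list \<Rightarrow> nat list \<Rightarrow> (nat list \<times> nat) list \<Rightarrow> nat list \<Rightarrow> seg_letter list" where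
  "segw ps ul qs vl = concat (map2 (\<lambda>(u, i) (v, j). map T1 u @ map T2 v @ [Gam i j]) ps qs)
        @ map T1 ul @ map T2 vl"

lemma projA_append[simp]: "projA (x @ y) = projA x @ projA y" by (simp add: projA_def)
lemma projB_append[simp]: "projB (x @ y) = projB x @ projB y" by (simp add: projB_def)
lemma projA_simps[simp]: "projA [] = []" "projA (map T1 u) = map Inl u" "projA (map T2 u) = []"
  "projA [Gam i j] = [Inr i]"
  by (induction u) (auto simp: projA_def)
lemma projB_simps[simp]: "projB [] = []" "projB (map T1 u) = []" "projB (map T2 u) = map Inl u"
  "projB [Gam i j] = [Inr j]"
  by (induction u) (auto simp: projB_def)

lemma proj_Gam[simp]: "projA (Gam i j # w) = Inr i # projA w" "projB (Gam i j # w) = Inr j # projB w"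
  by (simp_all add: projA_def projB_def)

lemma word_of_Cons: "word_of ((u,i) # ps) ul = map Inl u @ Inr i # word_of ps ul"
  by (simp add: word_of_def)
lemma word_of_Nil: "word_of [] ul = map Inl ul"
  by (simp add: word_of_def)

lemma proj_segw:
  "length ps = length qs \<Longrightarrow> projA (segw ps ul qs vl) = word_of ps ul \<and> projB (segw ps ul qs vl) = word_of qs vl"
proof (induction ps arbitrary: qs)
  case Nil then show ?case by (simp add: segw_def word_of_def)
next
  case (Cons pi ps)
  then obtain qj qs' where qs: "qs = qj # qs'" "length ps = length qs'" by (cases qs) auto
  obtain u i where pi: "pi = (u,i)" by (cases pi)
  obtain v j where qj: "qj = (v,j)" by (cases qj)
  have "segw (pi # ps) ul qs vl = map T1 u @ map T2 v @ [Gam i j] @ segw ps ul qs' vl"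
    by (simp add: segw_def qs pi qj)
  then show ?case using Cons.IH[OF qs(2)] by (simp add: pi qs qj word_of_Cons)
qed

lemma count_T1: "length (filter is_T1 w) = length (filter isl (projA w))"
  by (induction w) (auto simp: projA_def split: seg_letter.split)
lemma count_Gam: "length (filter is_Gam w) = length (filter (\<lambda>x. \<not> isl x) (projA w))"
  by (induction w) (auto simp: projA_def split: seg_letter.split)
lemma count_T2: "length (filter is_T2 w) = length (filter isl (projB w))"
  by (induction w) (auto simp: projB_def split: seg_letter.split)
lemma count_GamB: "length (filter is_Gam w) = length (filter (\<lambda>x. \<not> isl x) (projB w))"
  by (induction w) (auto simp: projB_def split: seg_letter.split)

lemma word_of_exists: "\<exists>ps ul. w = word_of ps ul"
proof (induction w)
  case Nil then show ?case by (intro exI[of _ "[]"]) (simp add: word_of_def)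
next
  case (Cons x w)
  then obtain ps ul where w: "w = word_of ps ul" by blast
  show ?case
  proof (cases x)
    case (Inl y)
    show ?thesis
    proof (cases ps)
      case Nil
      then show ?thesis using w Inl by (intro exI[of _ "[]"] exI[of _ "y # ul"]) (simp add: word_of_def)
    next
      case (Cons pi ps')
      obtain u i where "pi = (u,i)" by (cases pi)
      then show ?thesis using w Inl Cons
        by (intro exI[of _ "(y # u, i) # ps'"] exI[of _ ul]) (simp add: word_of_Cons)
    qed
  next
    case (Inr i)
    then show ?thesis using w by (intro exI[of _ "([], i) # ps"] exI[of _ ul]) (simp add: word_of_Cons)
  qed
qed

lemma word_of_count: "length (filter (\<lambda>x. \<not> isl x) (word_of ps ul)) = length ps"
  by (induction ps) (auto simp: word_of_def)

lemma map_Inl_Inr_eq: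
  "map Inl u @ Inr i # r = map Inl u' @ Inr i' # r' \<Longrightarrow> u = u' \<and> i = i' \<and> r = r'"
proof (induction u arbitrary: u')
  case Nil then show ?case by (cases u') auto
next
  case (Cons a u) then show ?case by (cases u') auto
qed

lemma word_of_inj: "word_of ps ul = word_of ps' ul' \<Longrightarrow> ps = ps' \<and> ul = ul'"
proof (induction ps arbitrary: ps')
  case Nil
  show ?case
  proof (cases ps')
    case Nil then show ?thesis using Nil.prems by (simp add: word_of_Nil inj_map_eq_map)
  next
    case (Cons qi qs)
    obtain u i where "qi = (u,i)" by (cases qi)
    then have "Inr i \<in> set (word_of ps' ul')" using Cons by (simp add: word_of_Cons)
    moreover have "Inr i \<notin> set (word_of [] ul)" by (auto simp: word_of_Nil)
    ultimately show ?thesis using Nil.prems by simp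
  qed
next
  case (Cons pi ps)
  obtain u i where pi: "pi = (u,i)" by (cases pi)
  show ?case
  proof (cases ps')
    case Nil
    have "Inr i \<in> set (word_of (pi # ps) ul)" using pi by (simp add: word_of_Cons)
    moreover have "Inr i \<notin> set (word_of ps' ul')" using Nil by (auto simp: word_of_Nil)
    ultimately show ?thesis using Cons.prems by simp
  next
    case (Cons qi qs)
    obtain u' i' where qi: "qi = (u',i')" by (cases qi)
    have "u = u' \<and> i = i' \<and> word_of ps ul = word_of qs ul'"
      using Cons.prems pi qi Cons by (intro map_Inl_Inr_eq) (simp add: word_of_Cons)
    then show ?thesis using Cons.IH pi qi Cons by blast
  qed
qed


lemma segre_lang_eq: "segre_lang LA LB = {segw ps ul qs vl | ps ul qs vl.
        length ps = length qs \<and> word_of ps ul \<in> LA \<and> word_of qs vl \<in> LB}"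
  unfolding segre_lang_def segw_def ..

lemma seg_count_bij:
  "bij_betw (\<lambda>w. (projA w, projB w)) (seg_count (segre_lang LA LB) m n d) (count_lang LA m d \<times> count_lang LB n d)"
  unfolding bij_betw_def
proof
  show "inj_on (\<lambda>w. (projA w, projB w)) (seg_count (segre_lang LA LB) m n d)"
  proof (rule inj_onI)
    fix w1 w2 assume w1: "w1 \<in> seg_count (segre_lang LA LB) m n d" and w2: "w2 \<in> seg_count (segre_lang LA LB) m n d"
      and e: "(projA w1, projB w1) = (projA w2, projB w2)"
    obtain ps ul qs vl where 1: "w1 = segw ps ul qs vl" "length ps = length qs"
      using w1 unfolding seg_count_def segre_lang_eq by blast
    obtain ps' ul' qs' vl' where 2: "w2 = segw ps' ul' qs' vl'" "length ps' = length qs'"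
      using w2 unfolding seg_count_def segre_lang_eq by blast
    have "word_of ps ul = word_of ps' ul'" "word_of qs vl = word_of qs' vl'"
      using e proj_segw[OF 1(2), of ul vl] proj_segw[OF 2(2), of ul' vl'] 1(1) 2(1) by auto
    then show "w1 = w2" using word_of_inj 1(1) 2(1) by metis
  qed
  show "(\<lambda>w. (projA w, projB w)) ` seg_count (segre_lang LA LB) m n d = count_lang LA m d \<times> count_lang LB n d"
  proof (intro equalityI subsetI)
    fix x assume "x \<in> (\<lambda>w. (projA w, projB w)) ` seg_count (segre_lang LA LB) m n d"
    then obtain w where x: "x = (projA w, projB w)" and w: "w \<in> seg_count (segre_lang LA LB) m n d" by blast
    obtain ps ul qs vl where 1: "w = segw ps ul qs vl" "length ps = length qs" "word_of ps ul \<in> LA"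
      "word_of qs vl \<in> LB"
      using w unfolding seg_count_def segre_lang_eq by blast
    have c: "length (filter is_T1 w) = m" "length (filter is_T2 w) = n" "length (filter is_Gam w) = d"
      using w unfolding seg_count_def by auto
    have p: "projA w = word_of ps ul" "projB w = word_of qs vl" using proj_segw[OF 1(2)] 1(1) by auto
    show "x \<in> count_lang LA m d \<times> count_lang LB n d"
      using c p 1(3,4) count_T1[of w] count_T2[of w] count_Gam[of w] count_GamB[of w]
      unfolding x count_lang_def by auto
  next
    fix x assume x: "x \<in> count_lang LA m d \<times> count_lang LB n d"
    obtain wA wB where xx: "x = (wA, wB)" by (cases x)
    obtain ps ul where A: "wA = word_of ps ul" using word_of_exists by blast
    obtain qs vl where B: "wB = word_of qs vl" using word_of_exists by blast
    have cA: "wA \<in> LA" "length (filter isl wA) = m" "length (filter (\<lambda>x. \<not> isl x) wA) = d"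
      using x xx unfolding count_lang_def by auto
    have cB: "wB \<in> LB" "length (filter isl wB) = n" "length (filter (\<lambda>x. \<not> isl x) wB) = d"
      using x xx unfolding count_lang_def by auto
    have len: "length ps = length qs" using cA(3) cB(3) A B word_of_count by metis
    define w where "w = segw ps ul qs vl"
    have p: "projA w = wA" "projB w = wB" using proj_segw[OF len] A B w_def by auto
    have "w \<in> segre_lang LA LB" unfolding segre_lang_eq w_def using len A B cA(1) cB(1) by blast
    moreover have "length (filter is_T1 w) = m" "length (filter is_T2 w) = n" "length (filter is_Gam w) = d"
      using count_T1[of w] count_T2[of w] count_Gam[of w] p cA cB by auto
    ultimately have "w \<in> seg_count (segre_lang LA LB) m n d" unfolding seg_count_def by blast
    then show "x \<in> (\<lambda>w. (projA w, projB w)) ` seg_count (segre_lang LA LB) m n d"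
      using p xx by force
  qed
qed

lemma part_a:
  assumes "one_filtration X c1 d1 m0 GA" "one_filtration Y c2 d2 n0 GB"
    and "represented a p m0 GA LA" "represented b q n0 GB LB"
  shows "\<exists>M\<ge>m0. \<exists>N\<ge>n0. \<forall>m\<ge>M. \<forall>n\<ge>N. \<forall>d. \<exists>f.
            bij_betw f (mon_pow (segre_gens (GA m) (GB n)) d) (seg_count (segre_lang LA LB) m n d)"
proof -
  obtain M where M: "M \<ge> m0" "\<forall>m\<ge>M. \<forall>d. \<exists>f. bij_betw f (mon_pow (GA m) d) (count_lang LA m d)"
    using assms(3) unfolding represented_def by blast
  obtain N where N: "N \<ge> n0" "\<forall>n\<ge>N. \<forall>d. \<exists>f. bij_betw f (mon_pow (GB n) d) (count_lang LB n d)"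
    using assms(4) unfolding represented_def by blast
  have "\<exists>f. bij_betw f (mon_pow (segre_gens (GA m) (GB n)) d) (seg_count (segre_lang LA LB) m n d)"
    if m: "m \<ge> M" and n: "n \<ge> N" for m n d
  proof -
    obtain fA where fA: "bij_betw fA (mon_pow (GA m) d) (count_lang LA m d)" using M m by blast
    obtain fB where fB: "bij_betw fB (mon_pow (GB n) d) (count_lang LB n d)" using N n by blast
    have kA: "\<forall>g\<in>GA m. Poly_Mapping.keys g \<subseteq> Xvars" using one_filtration_X[OF assms(1), of m] M(1) m by simp
    have kB: "\<forall>g\<in>GB n. Poly_Mapping.keys g \<subseteq> Yvars" using one_filtration_Y[OF assms(2), of n] N(1) n by simp
    have b1: "bij_betw (inv_into (mon_pow (GA m) d \<times> mon_pow (GB n) d) (\<lambda>(u,v). u + v))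
        (mon_pow (segre_gens (GA m) (GB n)) d) (mon_pow (GA m) d \<times> mon_pow (GB n) d)"
      by (rule bij_betw_inv_into[OF segre_bij[OF kA kB]])
    have b2: "bij_betw (map_prod fA fB) (mon_pow (GA m) d \<times> mon_pow (GB n) d)
        (count_lang LA m d \<times> count_lang LB n d)"
      by (rule bij_betw_map_prod[OF fA fB])
    have b3: "bij_betw (inv_into (seg_count (segre_lang LA LB) m n d) (\<lambda>w. (projA w, projB w)))
        (count_lang LA m d \<times> count_lang LB n d) (seg_count (segre_lang LA LB) m n d)"
      by (rule bij_betw_inv_into[OF seg_count_bij])
    show ?thesis using bij_betw_trans[OF bij_betw_trans[OF b1 b2] b3] by blast
  qed
  then show ?thesis using M(1) N(1) by blast
qed


definition pieceF :: "(nat \<Rightarrow> monomial set) \<Rightarrow> nat \<Rightarrow> nat \<Rightarrow> nat \<Rightarrow> (nat \<Rightarrow> nat + nat \<Rightarrow> nat)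
   \<Rightarrow> nat set \<Rightarrow> nat \<Rightarrow> nat option \<Rightarrow> nat \<times> nat \<Rightarrow> int" where
  "pieceF G mt a p \<delta> F q0 \<alpha> = (case \<alpha> of
      None \<Rightarrow> (\<lambda>(m,d). if mt \<le> m then int (card (dfaW a p \<delta> F q0 m d)) else 0)
    | Some j \<Rightarrow> (\<lambda>(m,d). if m = j then int (card (mon_pow (G j) d)) else 0))"

lemma piece_ratR:
  assumes "sol2 SA cA EA1 tA1 EA2 tA2 f" "sA \<in> SA" "sol2 SB cB EB1 tB1 EB2 tB2 g" "sB \<in> SB"
  shows "ratR (toR (\<lambda>(m,n,d). (if j1 \<le> m then f sA (m - j1, d) else 0) * (if j2 \<le> n then g sB (n - j2, d) else 0)))"
proof -
  let ?H = "\<lambda>(m,n,d). f sA (m,d) * g sB (n,d)"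
  have "ratR (toR (\<lambda>(i,j,k). if j1 \<le> i \<and> j2 \<le> j then ?H (i-j1, j-j2, k) else 0))"
    by (rule ratR_shift[OF segre_sys[OF assms(1) assms(3) assms(2) assms(4)]])
  moreover have "(\<lambda>(i,j,k). if j1 \<le> i \<and> j2 \<le> j then ?H (i-j1, j-j2, k) else 0) =
     (\<lambda>(m,n,d). (if j1 \<le> m then f sA (m - j1, d) else 0) * (if j2 \<le> n then g sB (n - j2, d) else 0))"
    by (auto simp: fun_eq_iff)
  ultimately show ?thesis by simp
qed

lemma L1:
  assumes B: "sol2 SB cB EB1 tB1 EB2 tB2 g" "sB \<in> SB"
    and Q: "finite Q" "q0 \<in> Q" "\<forall>q\<in>Q. \<forall>x\<in>sigma a p. \<delta> q x \<in> Q"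
    and fin: "\<forall>j\<in>{m0..<mt}. finite (G j)"
    and \<alpha>: "\<alpha> \<in> insert None (Some ` {m0..<mt})"
  shows "ratR (toR (\<lambda>(m,n,d). pieceF G mt a p \<delta> F q0 \<alpha> (m,d) * (if j2 \<le> n then g sB (n - j2, d) else 0)))"
proof (cases \<alpha>)
  case None
  have S: "sol2 (Q \<times> {0..mt}) (\<lambda>(s,k). if mt \<le> k then (\<lambda>q. if q \<in> F then 1 else 0) s else 0)
    (\<lambda>(s,k). (\<lambda>q. {1..a}) s) (\<lambda>(s,k) e. ((\<lambda>q i. \<delta> q (Inl i)) s e, min (k+1) mt))
    (\<lambda>(s,k). (\<lambda>q. {1..p}) s) (\<lambda>(s,k) e. ((\<lambda>q i. \<delta> q (Inr i)) s e, k))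
    (\<lambda>(s,k) (m,d). if mt \<le> m + k then (\<lambda>q (m,d). int (card (dfaW a p \<delta> F q m d))) s (m,d) else 0)"
    by (rule counter_sys[OF dfa_sys[OF Q(1) Q(3)]])
  have q0: "(q0, 0) \<in> Q \<times> {0..mt}" using Q(2) by simp
  have eq: "(\<lambda>(m,n,d). (if 0 \<le> m then (\<lambda>(s,k) (m,d). if mt \<le> m + k then (\<lambda>q (m,d). int (card (dfaW a p \<delta> F q m d))) s (m,d) else 0) (q0, 0) (m - 0, d) else 0)
      * (if j2 \<le> n then g sB (n - j2, d) else 0))
    = (\<lambda>(m,n,d). pieceF G mt a p \<delta> F q0 \<alpha> (m,d) * (if j2 \<le> n then g sB (n - j2, d) else 0))" (is "?l = ?r")
  proof (rule ext)
    fix x :: "nat \<times> nat \<times> nat"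
    obtain m n d where x: "x = (m,n,d)" by (cases x) auto
    show "?l x = ?r x" unfolding x using None by (simp add: pieceF_def)
  qed
  show ?thesis using piece_ratR[OF S q0 B, of 0 j2] unfolding eq .
next
  case (Some j)
  then have j: "j \<in> {m0..<mt}" using \<alpha> by auto
  obtain ST c E1 t1 E2 t2 f s0 where S: "sol2 ST c (E1 :: nat \<times> (nat \<Rightarrow> nat) \<Rightarrow> nat set) t1 (E2 :: nat \<times> (nat \<Rightarrow> nat) \<Rightarrow> nat set) t2 (f :: nat \<times> (nat \<Rightarrow> nat) \<Rightarrow> nat \<times> nat \<Rightarrow> int)"
    "s0 \<in> ST" "\<forall>m d. f s0 (m,d) = (if m = 0 then int (card (mon_pow (G j) d)) else 0)"
    using mp_sys[of "G j"] fin j by blast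
  have e: "(if j \<le> m then f s0 (m - j, d) else 0) = (if m = j then int (card (mon_pow (G j) d)) else 0)" for m d
    using S(3) by auto
  have eq: "(\<lambda>(m,n,d). (if j \<le> m then f s0 (m - j, d) else 0) * (if j2 \<le> n then g sB (n - j2, d) else 0))
    = (\<lambda>(m,n,d). pieceF G mt a p \<delta> F q0 \<alpha> (m,d) * (if j2 \<le> n then g sB (n - j2, d) else 0))" (is "?l = ?r")
  proof (rule ext)
    fix x :: "nat \<times> nat \<times> nat"
    obtain m n d where x: "x = (m,n,d)" by (cases x) auto
    show "?l x = ?r x" unfolding x using Some e by (simp add: pieceF_def)
  qed
  show ?thesis using piece_ratR[OF S(1,2) B, of j j2] unfolding eq .
qed

lemma L2:
  assumes QA: "finite QA" "qA \<in> QA" "\<forall>q\<in>QA. \<forall>x\<in>sigma a p. \<delta>A q x \<in> QA"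
    and finA: "\<forall>j\<in>{m0..<mtA}. finite (GA j)"
    and \<alpha>: "\<alpha> \<in> insert None (Some ` {m0..<mtA})"
    and QB: "finite QB" "qB \<in> QB" "\<forall>s\<in>QB. \<forall>x\<in>sigma b q. \<delta>B s x \<in> QB"
    and finB: "\<forall>j\<in>{n0..<mtB}. finite (GB j)"
    and \<beta>: "\<beta> \<in> insert None (Some ` {n0..<mtB})"
  shows "ratR (toR (\<lambda>(m,n,d). pieceF GA mtA a p \<delta>A FA qA \<alpha> (m,d) * pieceF GB mtB b q \<delta>B FB qB \<beta> (n,d)))"
proof (cases \<beta>)
  case None
  have S: "sol2 (QB \<times> {0..mtB}) (\<lambda>(s,k). if mtB \<le> k then (\<lambda>q. if q \<in> FB then 1 else 0) s else 0)
    (\<lambda>(s,k). (\<lambda>q. {1..b}) s) (\<lambda>(s,k) e. ((\<lambda>qq i. \<delta>B qq (Inl i)) s e, min (k+1) mtB))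
    (\<lambda>(s,k). (\<lambda>qq. {1..q}) s) (\<lambda>(s,k) e. ((\<lambda>qq i. \<delta>B qq (Inr i)) s e, k))
    (\<lambda>(s,k) (m,d). if mtB \<le> m + k then (\<lambda>qq (m,d). int (card (dfaW b q \<delta>B FB qq m d))) s (m,d) else 0)"
    by (rule counter_sys[OF dfa_sys[OF QB(1) QB(3)]])
  have q0: "(qB, 0) \<in> QB \<times> {0..mtB}" using QB(2) by simp
  have eq: "(\<lambda>(m,n,d). pieceF GA mtA a p \<delta>A FA qA \<alpha> (m,d) * (if 0 \<le> n then (\<lambda>(s,k) (m,d). if mtB \<le> m + k then (\<lambda>qq (m,d). int (card (dfaW b q \<delta>B FB qq m d))) s (m,d) else 0) (qB, 0) (n - 0, d) else 0))
    = (\<lambda>(m,n,d). pieceF GA mtA a p \<delta>A FA qA \<alpha> (m,d) * pieceF GB mtB b q \<delta>B FB qB \<beta> (n,d))" (is "?l = ?r")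
  proof (rule ext)
    fix x :: "nat \<times> nat \<times> nat"
    obtain m n d where x: "x = (m,n,d)" by (cases x) auto
    show "?l x = ?r x" unfolding x using None by (simp add: pieceF_def)
  qed
  show ?thesis using L1[OF S q0 QA finA \<alpha>, of FA 0] unfolding eq .
next
  case (Some j)
  then have j: "j \<in> {n0..<mtB}" using \<beta> by auto
  obtain ST c E1 t1 E2 t2 f s0 where S: "sol2 ST c (E1 :: nat \<times> (nat \<Rightarrow> nat) \<Rightarrow> nat set) t1 (E2 :: nat \<times> (nat \<Rightarrow> nat) \<Rightarrow> nat set) t2 (f :: nat \<times> (nat \<Rightarrow> nat) \<Rightarrow> nat \<times> nat \<Rightarrow> int)"
    "s0 \<in> ST" "\<forall>m d. f s0 (m,d) = (if m = 0 then int (card (mon_pow (GB j) d)) else 0)"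
    using mp_sys[of "GB j"] finB j by blast
  have e: "(if j \<le> m then f s0 (m - j, d) else 0) = (if m = j then int (card (mon_pow (GB j) d)) else 0)" for m d
    using S(3) by auto
  have eq: "(\<lambda>(m,n,d). pieceF GA mtA a p \<delta>A FA qA \<alpha> (m,d) * (if j \<le> n then f s0 (n - j, d) else 0))
    = (\<lambda>(m,n,d). pieceF GA mtA a p \<delta>A FA qA \<alpha> (m,d) * pieceF GB mtB b q \<delta>B FB qB \<beta> (n,d))" (is "?l = ?r")
  proof (rule ext)
    fix x :: "nat \<times> nat \<times> nat"
    obtain m n d where x: "x = (m,n,d)" by (cases x) auto
    show "?l x = ?r x" unfolding x using Some e by (simp add: pieceF_def)
  qed
  show ?thesis using L1[OF S(1,2) QA finA \<alpha>, of FA j] unfolding eq .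
qed


lemma count_lang_dfa:
  assumes "L = {w \<in> lists (sigma a p). foldl \<delta> q0 w \<in> F}"
  shows "count_lang L m d = dfaW a p \<delta> F q0 m d"
  using assms unfolding count_lang_def dfaW_def by auto

lemma side_decomp:
  assumes reg: "regular (sigma a p) L" and rep: "represented a p m0 G L"
  obtains Q q0 \<delta> F mt where "finite Q" "q0 \<in> Q" "\<forall>s\<in>Q. \<forall>x\<in>sigma a p. \<delta> s x \<in> Q" "mt \<ge> m0"
    "\<And>m d. (if m0 \<le> m then int (card (mon_pow (G m) d)) else 0)
        = (\<Sum>\<alpha>\<in>insert None (Some ` {m0..<mt}). pieceF G mt a p \<delta> F q0 \<alpha> (m,d))"
proof -
  obtain Q q0 \<delta> F where D: "finite (Q::nat set)" "q0 \<in> Q" "\<forall>s\<in>Q. \<forall>x\<in>sigma a p. \<delta> s x \<in> Q"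
    "L = {w \<in> lists (sigma a p). foldl \<delta> q0 w \<in> F}"
    using reg unfolding regular_def by blast
  obtain mt where mt: "mt \<ge> m0" "\<forall>m\<ge>mt. \<forall>d. \<exists>f. bij_betw f (mon_pow (G m) d) (count_lang L m d)"
    using rep unfolding represented_def by blast
  have cardeq: "card (mon_pow (G m) d) = card (dfaW a p \<delta> F q0 m d)" if mtm: "mt \<le> m" for m d
  proof -
    obtain f where "bij_betw f (mon_pow (G m) d) (count_lang L m d)" using mt mtm by blast
    then show ?thesis using bij_betw_same_card count_lang_dfa[OF D(4)] by metis
  qed
  have "(if m0 \<le> m then int (card (mon_pow (G m) d)) else 0)
        = (\<Sum>\<alpha>\<in>insert None (Some ` {m0..<mt}). pieceF G mt a p \<delta> F q0 \<alpha> (m,d))" for m d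
  proof -
    have "(\<Sum>\<alpha>\<in>insert None (Some ` {m0..<mt}). pieceF G mt a p \<delta> F q0 \<alpha> (m,d))
        = pieceF G mt a p \<delta> F q0 None (m,d) + (\<Sum>j\<in>{m0..<mt}. pieceF G mt a p \<delta> F q0 (Some j) (m,d))"
      by (subst sum.insert) (auto simp: sum.reindex)
    also have "(\<Sum>j\<in>{m0..<mt}. pieceF G mt a p \<delta> F q0 (Some j) (m,d))
        = (\<Sum>j\<in>{m0..<mt}. if m = j then int (card (mon_pow (G j) d)) else 0)"
      by (simp add: pieceF_def)
    also have "\<dots> = (if m \<in> {m0..<mt} then int (card (mon_pow (G m) d)) else 0)"
      by (rule sum.delta') simp
    finally show ?thesis using cardeq[of m d] mt(1) by (auto simp: pieceF_def)
  qed
  then show ?thesis using that D mt(1) by blast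
qed

lemma part_b:
  assumes "one_filtration X c1 d1 m0 GA" "one_filtration Y c2 d2 n0 GB"
    and "represented a p m0 GA LA" "represented b q n0 GB LB"
    and "regular (sigma a p) LA" "regular (sigma b q) LB"
  shows "rational3 (equivH m0 n0 GA GB)"
proof -
  obtain QA qA \<delta>A FA mtA where A: "finite QA" "qA \<in> QA" "\<forall>s\<in>QA. \<forall>x\<in>sigma a p. \<delta>A s x \<in> QA" "mtA \<ge> m0"
    "\<And>m d. (if m0 \<le> m then int (card (mon_pow (GA m) d)) else 0)
        = (\<Sum>\<alpha>\<in>insert None (Some ` {m0..<mtA}). pieceF GA mtA a p \<delta>A FA qA \<alpha> (m,d))"
    using side_decomp[OF assms(5,3)] by metis
  obtain QB qB \<delta>B FB mtB where B: "finite QB" "qB \<in> QB" "\<forall>s\<in>QB. \<forall>x\<in>sigma b q. \<delta>B s x \<in> QB" "mtB \<ge> n0"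
    "\<And>m d. (if n0 \<le> m then int (card (mon_pow (GB m) d)) else 0)
        = (\<Sum>\<alpha>\<in>insert None (Some ` {n0..<mtB}). pieceF GB mtB b q \<delta>B FB qB \<alpha> (m,d))"
    using side_decomp[OF assms(6,4)] by metis
  let ?IA = "insert None (Some ` {m0..<mtA})"
  let ?IB = "insert None (Some ` {n0..<mtB})"
  have finA: "\<forall>j\<in>{m0..<mtA}. finite (GA j)" using assms(1) unfolding one_filtration_def by auto
  have finB: "\<forall>j\<in>{n0..<mtB}. finite (GB j)" using assms(2) unfolding one_filtration_def by auto
  have H: "equivH m0 n0 GA GB (m,n,d) =
      (if m0 \<le> m then int (card (mon_pow (GA m) d)) else 0) * (if n0 \<le> n then int (card (mon_pow (GB n) d)) else 0)"
    for m n d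
  proof (cases "m0 \<le> m \<and> n0 \<le> n")
    case True
    have kA: "\<forall>g\<in>GA m. Poly_Mapping.keys g \<subseteq> Xvars" using one_filtration_X[OF assms(1), of m] True by simp
    have kB: "\<forall>g\<in>GB n. Poly_Mapping.keys g \<subseteq> Yvars" using one_filtration_Y[OF assms(2), of n] True by simp
    have "card (mon_pow (segre_gens (GA m) (GB n)) d) = card (mon_pow (GA m) d \<times> mon_pow (GB n) d)"
      using bij_betw_same_card[OF segre_bij[OF kA kB, of d]] by simp
    then show ?thesis using True by (simp add: equivH_def card_cartesian_product)
  next
    case False
    then show ?thesis by (auto simp: equivH_def)
  qed
  have "toR (equivH m0 n0 GA GB) = (\<Sum>\<alpha>\<in>?IA. \<Sum>\<beta>\<in>?IB.
      toR (\<lambda>(m,n,d). pieceF GA mtA a p \<delta>A FA qA \<alpha> (m,d) * pieceF GB mtB b q \<delta>B FB qB \<beta> (n,d)))"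
  proof (rule R3_ext)
    fix i j k
    show "co (toR (equivH m0 n0 GA GB)) i j k = co (\<Sum>\<alpha>\<in>?IA. \<Sum>\<beta>\<in>?IB.
      toR (\<lambda>(m,n,d). pieceF GA mtA a p \<delta>A FA qA \<alpha> (m,d) * pieceF GB mtB b q \<delta>B FB qB \<beta> (n,d))) i j k"
      unfolding co_sum co_toR prod.case H A(5) B(5) by (rule sum_product)
  qed
  moreover have "ratR (\<Sum>\<alpha>\<in>?IA. \<Sum>\<beta>\<in>?IB.
      toR (\<lambda>(m,n,d). pieceF GA mtA a p \<delta>A FA qA \<alpha> (m,d) * pieceF GB mtB b q \<delta>B FB qB \<beta> (n,d)))"
    by (intro ratR_sum L2[OF A(1-3) finA _ B(1-3) finB])
  ultimately show ?thesis using ratR_rational3 by metis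
qed


theorem theorem3p7:
  fixes c1 c2 d1 d2 m0 n0 a p b q :: nat
    and GA GB :: "nat \<Rightarrow> monomial set"
    and LA LB :: "(nat + nat) list set"
  assumes "c1 \<ge> 1" and "c2 \<ge> 1"
    and "one_filtration X c1 d1 m0 GA" and "one_filtration Y c2 d2 n0 GB"
    and "represented a p m0 GA LA" and "represented b q n0 GB LB"
  shows "(\<exists>M\<ge>m0. \<exists>N\<ge>n0. \<forall>m\<ge>M. \<forall>n\<ge>N. \<forall>d. \<exists>f.
            bij_betw f (mon_pow (segre_gens (GA m) (GB n)) d) (seg_count (segre_lang LA LB) m n d))
       \<and> (regular (sigma a p) LA \<and> regular (sigma b q) LB \<longrightarrow> rational3 (equivH m0 n0 GA GB))"
  using part_a[OF assms(3-6)] part_b[OF assms(3-6)] by blast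

end
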